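(* Let $G=(V,E,\partial)$ be a finite graph without self-loops and without double edges, with all edge lengths $\ell_e=1$, and let $\mathcal G$ be a vertex space of $G$ with discrete generalised Laplacian $\Delta_{\mathcal G}$. Then for all $t>0$ (indeed all $t\in\mathbb R$) $$\operatorname{tr}e^{-t\Delta_{\mathcal G}}=e^{-t}\sum_{n=0}^\infty\sum_{c\in C_n}\frac{t^n}{n!}W_{\mathcal G}(c)=e^{-t}\sum_{c\in C}\frac{t^{|c|}}{|c|!}W_{\mathcal G}(c).$$
   Context: $G=(V,E,\partial)$, $\partial\colon E\to V\times V$, $e\mapsto(\partial_-e,\partial_+e)$; $E_v=\{e:\partial_+e=v\}\sqcup\{e:\partial_-e=v\}$, $|E_v|\ge1$. Write $v\sim w$ if $v,w$ are joined by an edge (unique, since no double edges), and for $e\in E_v$ let $v_e$ be the other endpoint of $e$. A vertex space is $\mathcal G=\bigoplus_v\mathcal G_v$ with linear subspaces $\mathcal G_v\subseteq\mathbb C^{E_v}$, $P_v$ the orthogonal projection of $\mathbb C^{E_v}$ onto $\mathcal G_v$; $\mathcal G$ carries the norm $\|F\|^2=\sum_v\sum_{e\in E_v}|F_e(v)|^2$. With $\ell_e=1$, the discrete generalised Laplacian on $\mathcal G$ is $(\Delta_{\mathcal G}F)(v)=P_v\big(\{F_e(v)-F_e(v_e)\}_{e\in E_v}\big)$. For $v\sim w$ joined by edge $e$, let $A^{\max}(v,w)\colon\mathbb C^{E_w}\to\mathbb C^{E_v}$ send $F$ to the vector whose $e$-component is $F_e$ and whose other components are $0$, and set $A_{\mathcal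 G}(v,w)=P_vA^{\max}(v,w)|_{\mathcal G_w}\colon\mathcal G_w\to\mathcal G_v$. $C_n$ ($n\ge0$) is the set of closed combinatorial paths of length $n$, i.e., sequences $c=(v_0,\dots,v_{n-1})$ of vertices with $v_i\sim v_{i+1}$ ($0\le i\le n-2$) and $v_{n-1}\sim v_0$ (for $n=0$ the paths are single vertices $v_0$; $C_1=\emptyset$); $C=\bigcup_nC_n$ and $|c|=n$ for $c\in C_n$. The weight is $W_{\mathcal G}(c)=\operatorname{tr}\big(A_{\mathcal G}(v_0,v_1)A_{\mathcal G}(v_1,v_2)\cdots A_{\mathcal G}(v_{n-1},v_0)\big)$ (trace on $\mathcal G_{v_0}$; for $n=0$ the empty product is the identity of $\mathcal G_{v_0}$, so $W_{\mathcal G}(c)=\dim\mathcal G_{v_0}$). *)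

theory Defs
  imports "HOL-Analysis.Analysis"
begin

text \<open>Vectors in C^X are represented as functions 'i => complex (only the values on X matter;
  elements of the subspaces considered vanish outside X).\<close>

definition inner_on :: "'i set \<Rightarrow> ('i \<Rightarrow> complex) \<Rightarrow> ('i \<Rightarrow> complex) \<Rightarrow> complex" where
  "inner_on X a b = (\<Sum>x\<in>X. cnj (a x) * b x)"

definition subspace_on :: "'i set \<Rightarrow> ('i \<Rightarrow> complex) set \<Rightarrow> bool" where
  "subspace_on X S \<longleftrightarrow> (\<lambda>_. 0) \<in> S
     \<and> (\<forall>f\<in>S. \<forall>g\<in>S. (\<lambda>x. f x + g x) \<in> S)
     \<and> (\<forall>c. \<forall>f\<in>S. (\<lambda>x. c * f x) \<in> S)
     \<and> (\<forall>f\<in>S. \<forall>x. x \<notin> X \<longrightarrow> f x = 0)"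

definition proj_on :: "'i set \<Rightarrow> ('i \<Rightarrow> complex) set \<Rightarrow> ('i \<Rightarrow> complex) \<Rightarrow> ('i \<Rightarrow> complex)" where
  "proj_on X S f = (THE g. g \<in> S \<and> (\<forall>h\<in>S. inner_on X h (\<lambda>x. f x - g x) = 0))"

definition onb_on :: "'i set \<Rightarrow> ('i \<Rightarrow> complex) set \<Rightarrow> ('i \<Rightarrow> complex) set \<Rightarrow> bool" where
  "onb_on X S B \<longleftrightarrow> finite B \<and> B \<subseteq> S
     \<and> (\<forall>b\<in>B. \<forall>b'\<in>B. inner_on X b b' = (if b = b' then 1 else 0))
     \<and> (\<forall>f\<in>S. \<exists>c. \<forall>x\<in>X. f x = (\<Sum>b\<in>B. c b * b x))"

definition trace_on :: "'i set \<Rightarrow> ('i \<Rightarrow> complex) set \<Rightarrow> (('i \<Rightarrow> complex) \<Rightarrow> ('i \<Rightarrow> complex)) \<Rightarrow> complex" where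
  "trace_on X S T = (let B = (SOME B. onb_on X S B) in \<Sum>b\<in>B. inner_on X b (T b))"

definition op_exp :: "(('i \<Rightarrow> complex) \<Rightarrow> ('i \<Rightarrow> complex)) \<Rightarrow> ('i \<Rightarrow> complex) \<Rightarrow> ('i \<Rightarrow> complex)" where
  "op_exp T F = (\<lambda>x. \<Sum>k. (T ^^ k) F x / of_nat (fact k))"

definition finite_simple_graph :: "'v set \<Rightarrow> 'e set \<Rightarrow> ('e \<Rightarrow> 'v \<times> 'v) \<Rightarrow> bool" where
  "finite_simple_graph V E d \<longleftrightarrow> finite V \<and> finite E
     \<and> (\<forall>e\<in>E. fst (d e) \<in> V \<and> snd (d e) \<in> V)
     \<and> (\<forall>e\<in>E. fst (d e) \<noteq> snd (d e))
     \<and> (\<forall>e\<in>E. \<forall>e'\<in>E. {fst (d e), snd (d e)} = {fst (d e'), snd (d e')} \<longrightarrow> e = e')"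

definition edges_at :: "'e set \<Rightarrow> ('e \<Rightarrow> 'v \<times> 'v) \<Rightarrow> 'v \<Rightarrow> 'e set" where
  "edges_at E d v = {e\<in>E. snd (d e) = v} \<union> {e\<in>E. fst (d e) = v}"

definition other_end :: "('e \<Rightarrow> 'v \<times> 'v) \<Rightarrow> 'e \<Rightarrow> 'v \<Rightarrow> 'v" where
  "other_end d e v = (if fst (d e) = v then snd (d e) else fst (d e))"

definition adj :: "'e set \<Rightarrow> ('e \<Rightarrow> 'v \<times> 'v) \<Rightarrow> 'v \<Rightarrow> 'v \<Rightarrow> bool" where
  "adj E d v w \<longleftrightarrow> (\<exists>e\<in>E. {fst (d e), snd (d e)} = {v, w} \<and> v \<noteq> w)"

definition edge_betw :: "'e set \<Rightarrow> ('e \<Rightarrow> 'v \<times> 'v) \<Rightarrow> 'v \<Rightarrow> 'v \<Rightarrow> 'e" where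
  "edge_betw E d v w = (THE e. e \<in> E \<and> {fst (d e), snd (d e)} = {v, w})"

definition vertex_space :: "'v set \<Rightarrow> 'e set \<Rightarrow> ('e \<Rightarrow> 'v \<times> 'v) \<Rightarrow> ('v \<Rightarrow> ('e \<Rightarrow> complex) set) \<Rightarrow> bool" where
  "vertex_space V E d Gs \<longleftrightarrow> (\<forall>v\<in>V. subspace_on (edges_at E d v) (Gs v))"

text \<open>Index set of the ambient space: pairs (v,e) with e in E_v; F (v,e) = F_e(v).\<close>
definition idx :: "'v set \<Rightarrow> 'e set \<Rightarrow> ('e \<Rightarrow> 'v \<times> 'v) \<Rightarrow> ('v \<times> 'e) set" where
  "idx V E d = {(v, e). v \<in> V \<and> e \<in> edges_at E d v}"

text \<open>The vertex space G = direct sum of the G_v, inside C^{idx}.\<close>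
definition vspace :: "'v set \<Rightarrow> 'e set \<Rightarrow> ('e \<Rightarrow> 'v \<times> 'v) \<Rightarrow> ('v \<Rightarrow> ('e \<Rightarrow> complex) set) \<Rightarrow> ('v \<times> 'e \<Rightarrow> complex) set" where
  "vspace V E d Gs = {F. (\<forall>v\<in>V. (\<lambda>e. F (v, e)) \<in> Gs v) \<and> (\<forall>v e. v \<notin> V \<longrightarrow> F (v, e) = 0)}"

definition disc_lap :: "'v set \<Rightarrow> 'e set \<Rightarrow> ('e \<Rightarrow> 'v \<times> 'v) \<Rightarrow> ('v \<Rightarrow> ('e \<Rightarrow> complex) set)
    \<Rightarrow> ('v \<times> 'e \<Rightarrow> complex) \<Rightarrow> ('v \<times> 'e \<Rightarrow> complex)" where
  "disc_lap V E d Gs F = (\<lambda>(v, e). if v \<in> V then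
      proj_on (edges_at E d v) (Gs v)
        (\<lambda>e'. if e' \<in> edges_at E d v then F (v, e') - F (other_end d e' v, e') else 0) e
    else 0)"

definition heat_trace :: "'v set \<Rightarrow> 'e set \<Rightarrow> ('e \<Rightarrow> 'v \<times> 'v) \<Rightarrow> ('v \<Rightarrow> ('e \<Rightarrow> complex) set) \<Rightarrow> real \<Rightarrow> complex" where
  "heat_trace V E d Gs t = trace_on (idx V E d) (vspace V E d Gs)
      (op_exp (\<lambda>F x. complex_of_real (- t) * disc_lap V E d Gs F x))"

text \<open>A^max(v,w) and A_G(v,w) (the latter used only on G_w).\<close>
definition A_max :: "'e set \<Rightarrow> ('e \<Rightarrow> 'v \<times> 'v) \<Rightarrow> 'v \<Rightarrow> 'v \<Rightarrow> ('e \<Rightarrow> complex) \<Rightarrow> ('e \<Rightarrow> complex)" where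
  "A_max E d v w F = (\<lambda>e'. if e' = edge_betw E d v w then F e' else 0)"

definition A_G :: "'e set \<Rightarrow> ('e \<Rightarrow> 'v \<times> 'v) \<Rightarrow> ('v \<Rightarrow> ('e \<Rightarrow> complex) set) \<Rightarrow> 'v \<Rightarrow> 'v
    \<Rightarrow> ('e \<Rightarrow> complex) \<Rightarrow> ('e \<Rightarrow> complex)" where
  "A_G E d Gs v w F = proj_on (edges_at E d v) (Gs v) (A_max E d v w F)"

text \<open>Closed combinatorial paths of length n, as vertex lists (v_0,...,v_{n-1});
  for n = 0 the paths are the single vertices, represented as one-element lists [v_0].\<close>
definition closed_paths :: "'v set \<Rightarrow> 'e set \<Rightarrow> ('e \<Rightarrow> 'v \<times> 'v) \<Rightarrow> nat \<Rightarrow> 'v list set" where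
  "closed_paths V E d n = (if n = 0 then {[v] | v. v \<in> V} else
     {c. length c = n \<and> set c \<subseteq> V \<and> (\<forall>i. Suc i < n \<longrightarrow> adj E d (c ! i) (c ! Suc i))
         \<and> adj E d (c ! (n - 1)) (c ! 0)})"

definition all_closed_paths :: "'v set \<Rightarrow> 'e set \<Rightarrow> ('e \<Rightarrow> 'v \<times> 'v) \<Rightarrow> 'v list set" where
  "all_closed_paths V E d = (\<Union>n. closed_paths V E d n)"

text \<open>|c|: the length of a closed path (0 for the one-vertex paths of C_0).\<close>
definition path_len :: "'v list \<Rightarrow> nat" where
  "path_len c = (if length c \<le> 1 then 0 else length c)"

definition weight :: "'e set \<Rightarrow> ('e \<Rightarrow> 'v \<times> 'v) \<Rightarrow> ('v \<Rightarrow> ('e \<Rightarrow> complex) set) \<Rightarrow> 'v list \<Rightarrow> complex" where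
  "weight E d Gs c = (let n = path_len c in
     trace_on (edges_at E d (c ! 0)) (Gs (c ! 0))
       (foldr (\<lambda>i acc. A_G E d Gs (c ! i) (c ! ((i + 1) mod n)) \<circ> acc) [0..<n] id))"

end

theory Submission
  imports Defs
begin


definition nrm :: "'i set \<Rightarrow> ('i \<Rightarrow> complex) \<Rightarrow> real" where
  "nrm X f = (\<Sum>x\<in>X. (cmod (f x))^2)"

definition orthon :: "'i set \<Rightarrow> ('i \<Rightarrow> complex) set \<Rightarrow> bool" where
  "orthon X B \<longleftrightarrow> (\<forall>b\<in>B. \<forall>b'\<in>B. inner_on X b b' = (if b = b' then 1 else 0))"

lemma nrm_nonneg: "nrm X f \<ge> 0"
  unfolding nrm_def by (simp add: sum_nonneg)

lemma inner_self: "inner_on X f f = of_real (nrm X f)"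
  unfolding inner_on_def nrm_def of_real_sum
  by (intro sum.cong refl) (metis complex_norm_square mult.commute)

lemma inner_cnj: "inner_on X a b = cnj (inner_on X b a)"
  unfolding inner_on_def by (simp add: mult.commute)

lemma inner_sum_right:
  "inner_on X a (\<lambda>y. \<Sum>i\<in>I. c i * h i y) = (\<Sum>i\<in>I. c i * inner_on X a (h i))"
  unfolding inner_on_def
  by (simp add: sum_distrib_left sum_distrib_right mult.left_commute sum.swap[of _ X])

lemma inner_sum_left:
  "inner_on X (\<lambda>y. \<Sum>i\<in>I. c i * h i y) a = (\<Sum>i\<in>I. cnj (c i) * inner_on X (h i) a)"
  unfolding inner_on_def
  by (simp add: sum_distrib_left sum_distrib_right mult.assoc sum.swap[of _ X])

lemma inner_diff_right: "inner_on X a (\<lambda>y. f y - g y) = inner_on X a f - inner_on X a g"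
  unfolding inner_on_def by (simp add: right_diff_distrib sum_subtractf)

lemma inner_diff_left: "inner_on X (\<lambda>y. f y - g y) a = inner_on X f a - inner_on X g a"
  unfolding inner_on_def by (simp add: left_diff_distrib sum_subtractf)

lemma inner_scale_right: "inner_on X a (\<lambda>y. c * f y) = c * inner_on X a f"
  unfolding inner_on_def by (simp add: sum_distrib_left mult.left_commute)

lemma inner_scale_left: "inner_on X (\<lambda>y. c * f y) a = cnj c * inner_on X f a"
  unfolding inner_on_def by (simp add: sum_distrib_left mult.assoc)

lemma inner_zero_left: "inner_on X (\<lambda>_. 0) a = 0"
  unfolding inner_on_def by simp

lemma inner_cong: "(\<And>x. x \<in> X \<Longrightarrow> a x = a' x) \<Longrightarrow> (\<And>x. x \<in> X \<Longrightarrow> b x = b' x)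
   \<Longrightarrow> inner_on X a b = inner_on X a' b'"
  unfolding inner_on_def by (rule sum.cong) auto

lemma nrm_zero_iff: "finite X \<Longrightarrow> nrm X f = 0 \<longleftrightarrow> (\<forall>x\<in>X. f x = 0)"
  unfolding nrm_def by (subst sum_nonneg_eq_0_iff) auto

lemma nrm_pt: "finite X \<Longrightarrow> x \<in> X \<Longrightarrow> (cmod (f x))^2 \<le> nrm X f"
  unfolding nrm_def by (rule member_le_sum) auto

lemma sub_zero: "subspace_on X S \<Longrightarrow> (\<lambda>_. 0) \<in> S"
  unfolding subspace_on_def by blast
lemma sub_add: "subspace_on X S \<Longrightarrow> f \<in> S \<Longrightarrow> g \<in> S \<Longrightarrow> (\<lambda>x. f x + g x) \<in> S"
  unfolding subspace_on_def by blast
lemma sub_scale: "subspace_on X S \<Longrightarrow> f \<in> S \<Longrightarrow> (\<lambda>x. c * f x) \<in> S"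
  unfolding subspace_on_def by blast
lemma sub_out: "subspace_on X S \<Longrightarrow> f \<in> S \<Longrightarrow> x \<notin> X \<Longrightarrow> f x = 0"
  unfolding subspace_on_def by blast
lemma sub_diff: "subspace_on X S \<Longrightarrow> f \<in> S \<Longrightarrow> g \<in> S \<Longrightarrow> (\<lambda>x. f x - g x) \<in> S"
proof -
  assume a: "subspace_on X S" "f \<in> S" "g \<in> S"
  have "(\<lambda>x. f x + (\<lambda>x. (-1) * g x) x) \<in> S"
    using a by (intro sub_add sub_scale) auto
  thus ?thesis by simp
qed
lemma sub_sum: assumes "subspace_on X S" "finite I" "\<And>i. i \<in> I \<Longrightarrow> h i \<in> S"
  shows "(\<lambda>y. \<Sum>i\<in>I. c i * h i y) \<in> S"
  using assms(2,3)
proof (induction I rule: finite_induct)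
  case empty then show ?case using sub_zero[OF assms(1)] by simp
next
  case (insert a F)
  have "(\<lambda>y. (\<lambda>y. c a * h a y) y + (\<lambda>y. \<Sum>i\<in>F. c i * h i y) y) \<in> S"
    using insert assms(1) by (intro sub_add sub_scale) auto
  then show ?case using insert by simp
qed

definition res :: "'i set \<Rightarrow> ('i \<Rightarrow> complex) set \<Rightarrow> ('i \<Rightarrow> complex) \<Rightarrow> ('i \<Rightarrow> complex)" where
  "res X B f = (\<lambda>y. f y - (\<Sum>b\<in>B. inner_on X b f * b y))"

lemma orth_res: assumes "finite B" "orthon X B" "b0 \<in> B"
  shows "inner_on X b0 (res X B f) = 0"
proof -
  have "inner_on X b0 (res X B f) = inner_on X b0 f - (\<Sum>b\<in>B. inner_on X b f * inner_on X b0 b)"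
    unfolding res_def by (simp add: inner_diff_right inner_sum_right)
  also have "(\<Sum>b\<in>B. inner_on X b f * inner_on X b0 b) = (\<Sum>b\<in>B. if b = b0 then inner_on X b f else 0)"
    using assms by (intro sum.cong) (auto simp: orthon_def)
  also have "\<dots> = inner_on X b0 f" using assms by simp
  finally show ?thesis by simp
qed

lemma bessel_eq: assumes "finite B" "orthon X B"
  shows "nrm X (res X B f) = nrm X f - (\<Sum>b\<in>B. (cmod (inner_on X b f))^2)"
proof -
  have p: "inner_on X (\<lambda>y. \<Sum>b\<in>B. inner_on X b f * b y) (res X B f) = 0"
    using orth_res[OF assms] by (simp add: inner_sum_left)
  have "of_real (nrm X (res X B f)) = inner_on X (res X B f) (res X B f)"
    by (simp add: inner_self)
  also have "\<dots> = inner_on X f (res X B f)"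
    using p unfolding res_def[of X B f] by (simp add: inner_diff_left)
  also have "\<dots> = inner_on X f f - (\<Sum>b\<in>B. inner_on X b f * inner_on X f b)"
    unfolding res_def by (simp add: inner_diff_right inner_sum_right)
  also have "(\<Sum>b\<in>B. inner_on X b f * inner_on X f b) = (\<Sum>b\<in>B. of_real ((cmod (inner_on X b f))^2))"
    by (intro sum.cong refl) (metis complex_norm_square inner_cnj)
  finally have "of_real (nrm X (res X B f)) = (of_real (nrm X f - (\<Sum>b\<in>B. (cmod (inner_on X b f))^2)) :: complex)"
    by (simp add: inner_self)
  then show ?thesis using of_real_eq_iff by blast
qed

lemma bessel: assumes "finite B" "orthon X B"
  shows "(\<Sum>b\<in>B. (cmod (inner_on X b f))^2) \<le> nrm X f"
  using bessel_eq[OF assms, of f] nrm_nonneg[of X "res X B f"] by simp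

lemma orthon_card: assumes "finite X" "finite B" "orthon X B"
  shows "card B \<le> card X"
proof -
  have "real (card B) = (\<Sum>b\<in>B. nrm X b)"
  proof -
    have "nrm X b = 1" if "b \<in> B" for b
      using assms(3) that inner_self[of X b] unfolding orthon_def by auto
    then show ?thesis by simp
  qed
  also have "\<dots> = (\<Sum>x\<in>X. \<Sum>b\<in>B. (cmod (inner_on X b (\<lambda>y. if y = x then 1 else 0)))^2)"
    unfolding nrm_def inner_on_def
    by (subst sum.swap) (intro sum.cong refl, simp add: if_distrib assms(1) cong: if_cong)
  also have "\<dots> \<le> (\<Sum>x\<in>X. nrm X (\<lambda>y. if y = x then 1 else 0))"
    by (intro sum_mono bessel assms)
  also have "\<dots> = (\<Sum>x\<in>X. 1)"
    unfolding nrm_def using assms(1) by (intro sum.cong refl) (simp add: if_distrib[of "\<lambda>z. (cmod z)^2"] cong: if_cong)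
  finally show ?thesis by simp
qed


lemma onb_exists: assumes "finite X" "subspace_on X S" shows "\<exists>B. onb_on X S B"
proof -
  let ?P = "\<lambda>B. finite B \<and> B \<subseteq> S \<and> orthon X B"
  have "?P {}" by (simp add: orthon_def)
  moreover have "\<forall>B. ?P B \<longrightarrow> card B < Suc (card X)"
    using orthon_card[OF assms(1)] le_imp_less_Suc by blast
  ultimately obtain B where B: "?P B" and mx: "\<forall>B'. ?P B' \<longrightarrow> card B' \<le> card B"
    using ex_has_greatest_nat[of ?P "{}" card "Suc (card X)"] by blast
  have "\<forall>f\<in>S. \<exists>c. \<forall>x\<in>X. f x = (\<Sum>b\<in>B. c b * b x)"
  proof
    fix f assume f: "f \<in> S"
    let ?r = "res X B f"
    have rS: "?r \<in> S" unfolding res_def using B f assms(2) by (intro sub_diff sub_sum) auto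
    show "\<exists>c. \<forall>x\<in>X. f x = (\<Sum>b\<in>B. c b * b x)"
    proof (cases "nrm X ?r = 0")
      case True
      then have "\<forall>x\<in>X. ?r x = 0" using nrm_zero_iff assms(1) by blast
      then show ?thesis unfolding res_def by (intro exI[of _ "\<lambda>b. inner_on X b f"]) auto
    next
      case False
      then have rpos: "nrm X ?r > 0" using nrm_nonneg[of X ?r] by linarith
      define g where "g = (\<lambda>y. complex_of_real (1 / sqrt (nrm X ?r)) * ?r y)"
      have gS: "g \<in> S" unfolding g_def using assms(2) rS by (rule sub_scale)
      have r1: "(1 / sqrt (nrm X ?r)) * ((1 / sqrt (nrm X ?r)) * nrm X ?r) = 1"
        using rpos by (simp add: field_simps)
      have gg: "inner_on X g g = 1"
        unfolding g_def inner_scale_left inner_scale_right inner_self complex_cnj_complex_of_real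
          of_real_mult[symmetric] r1 by simp
      have gB: "inner_on X b g = 0" if "b \<in> B" for b
        unfolding g_def inner_scale_right using orth_res[OF _ _ that] B by simp
      have gnB: "g \<notin> B" using gg gB by force
      have "?P (insert g B)"
      proof -
        have gB': "inner_on X g b = 0" if "b \<in> B" for b
          using gB[OF that] inner_cnj[of X g b] by simp
        show ?thesis using B gS gg gB gB' gnB unfolding orthon_def by auto
      qed
      then have "card (insert g B) \<le> card B" using mx by blast
      then show ?thesis using gnB B by simp
    qed
  qed
  thus ?thesis using B unfolding onb_on_def orthon_def by blast
qed

lemma onb_orthon: "onb_on X S B \<Longrightarrow> orthon X B"
  unfolding onb_on_def orthon_def by blast

lemma onb_expand: assumes "onb_on X S B" "subspace_on X S" "f \<in> S"
  shows "f = (\<lambda>y. \<Sum>b\<in>B. inner_on X b f * b y)"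
proof
  fix y
  obtain c where c: "\<forall>x\<in>X. f x = (\<Sum>b\<in>B. c b * b x)" using assms unfolding onb_on_def by blast
  have ci: "inner_on X b0 f = c b0" if "b0 \<in> B" for b0
  proof -
    have "inner_on X b0 f = inner_on X b0 (\<lambda>y. \<Sum>b\<in>B. c b * b y)" by (rule inner_cong) (use c in auto)
    also have "\<dots> = (\<Sum>b\<in>B. c b * inner_on X b0 b)" by (rule inner_sum_right)
    also have "\<dots> = (\<Sum>b\<in>B. if b = b0 then c b else 0)"
      using that assms(1) unfolding onb_on_def by (intro sum.cong) auto
    also have "\<dots> = c b0" using that assms(1) by (simp add: onb_on_def)
    finally show ?thesis .
  qed
  show "f y = (\<Sum>b\<in>B. inner_on X b f * b y)"
  proof (cases "y \<in> X")
    case True then show ?thesis using c ci by (auto intro: sum.cong)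
  next
    case False
    have "b y = 0" if "b \<in> B" for b using sub_out[OF assms(2) _ False] that assms(1)
      unfolding onb_on_def by blast
    then show ?thesis using sub_out[OF assms(2) assms(3) False] by (simp add: sum.neutral)
  qed
qed

lemma p_props: assumes "onb_on X S B" "subspace_on X S"
  shows "(\<lambda>y. \<Sum>b\<in>B. inner_on X b f * b y) \<in> S \<and>
    (\<forall>h\<in>S. inner_on X h (\<lambda>x. f x - (\<Sum>b\<in>B. inner_on X b f * b x)) = 0)"
proof -
  let ?p = "(\<lambda>y. \<Sum>b\<in>B. inner_on X b f * b y)"
  have fB: "finite B" "B \<subseteq> S" using assms(1) unfolding onb_on_def by auto
  have pS: "?p \<in> S" using fB assms(2) by (intro sub_sum) auto
  have orth: "\<forall>h\<in>S. inner_on X h (\<lambda>x. f x - ?p x) = 0"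
  proof
    fix h assume h: "h \<in> S"
    have "inner_on X h (\<lambda>x. f x - ?p x) = inner_on X h (res X B f)" by (simp add: res_def)
    also have "\<dots> = inner_on X (\<lambda>y. \<Sum>b\<in>B. inner_on X b h * b y) (res X B f)"
      using arg_cong[OF onb_expand[OF assms(1,2) h], of "\<lambda>k. inner_on X k (res X B f)"] by simp
    also have "\<dots> = (\<Sum>b\<in>B. cnj (inner_on X b h) * inner_on X b (res X B f))" by (rule inner_sum_left)
    also have "\<dots> = 0" using orth_res[OF fB(1) onb_orthon[OF assms(1)]] by simp
    finally show "inner_on X h (\<lambda>x. f x - ?p x) = 0" .
  qed
  show ?thesis using pS orth by simp
qed

lemma proj_formula: assumes "onb_on X S B" "subspace_on X S" "finite X"
  shows "proj_on X S f = (\<lambda>y. \<Sum>b\<in>B. inner_on X b f * b y)"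
proof -
  let ?p = "(\<lambda>y. \<Sum>b\<in>B. inner_on X b f * b y)"
  have pS: "?p \<in> S" and orth: "\<forall>h\<in>S. inner_on X h (\<lambda>x. f x - ?p x) = 0"
    using p_props[OF assms(1,2), of f] by auto
  have uniq: "g = ?p" if g: "g \<in> S" "\<forall>h\<in>S. inner_on X h (\<lambda>x. f x - g x) = 0" for g
  proof -
    let ?d = "\<lambda>x. g x - ?p x"
    have dS: "?d \<in> S" using sub_diff[OF assms(2) g(1) pS] .
    have e: "(\<lambda>x. (f x - ?p x) - (f x - g x)) = ?d" by auto
    have "inner_on X ?d ?d = inner_on X ?d (\<lambda>x. (f x - ?p x) - (f x - g x))" by (simp only: e)
    also have "\<dots> = inner_on X ?d (\<lambda>x. f x - ?p x) - inner_on X ?d (\<lambda>x. f x - g x)"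
      by (rule inner_diff_right)
    also have "\<dots> = 0"
    proof -
      have a: "inner_on X ?d (\<lambda>x. f x - ?p x) = 0" using orth dS by blast
      have b: "inner_on X ?d (\<lambda>x. f x - g x) = 0" using g(2) dS by blast
      show ?thesis by (simp only: a b diff_self)
    qed
    finally have "nrm X ?d = 0" by (simp add: inner_self)
    then have z1: "\<forall>x\<in>X. ?d x = 0" by (rule iffD1[OF nrm_zero_iff[OF assms(3)]])
    show ?thesis
    proof (rule ext)
      fix x
      have "?d x = 0"
      proof (cases "x \<in> X")
        case True then show ?thesis using z1 by (rule bspec[rotated])
      next
        case False then show ?thesis by (rule sub_out[OF assms(2) dS])
      qed
      then show "g x = ?p x" by (simp only: right_minus_eq)
    qed
  qed
  show ?thesis unfolding proj_on_def
    by (rule the_equality, use pS orth in blast, use uniq in blast)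
qed

lemma someB: assumes "finite X" "subspace_on X S" shows "onb_on X S (SOME B. onb_on X S B)"
  using onb_exists[OF assms] by (rule someI_ex)

lemma proj_form: assumes "finite X" "subspace_on X S"
  shows "proj_on X S f = (\<lambda>y. \<Sum>b\<in>(SOME B. onb_on X S B). inner_on X b f * b y)"
  using proj_formula[OF someB[OF assms] assms(2,1)] .

lemma proj_in: assumes "finite X" "subspace_on X S" shows "proj_on X S f \<in> S"
  using p_props[OF someB[OF assms] assms(2)] proj_form[OF assms] by simp

lemma proj_orth: assumes "finite X" "subspace_on X S" "h \<in> S"
  shows "inner_on X h (\<lambda>x. f x - proj_on X S f x) = 0"
  using p_props[OF someB[OF assms(1,2)] assms(2)] proj_form[OF assms(1,2)] assms(3) by simp

lemma proj_id: assumes "finite X" "subspace_on X S" "f \<in> S" shows "proj_on X S f = f"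
  using proj_form[OF assms(1,2)] onb_expand[OF someB[OF assms(1,2)] assms(2,3)] by simp

lemma proj_sum: assumes "finite X" "subspace_on X S"
  shows "proj_on X S (\<lambda>y. \<Sum>i\<in>I. c i * h i y) = (\<lambda>y. \<Sum>i\<in>I. c i * proj_on X S (h i) y)"
  unfolding proj_form[OF assms] inner_sum_right
  by (simp add: sum_distrib_left sum_distrib_right mult.assoc sum.swap[of _ I])

lemma proj_diff: assumes "finite X" "subspace_on X S"
  shows "proj_on X S (\<lambda>y. f y - g y) = (\<lambda>y. proj_on X S f y - proj_on X S g y)"
  unfolding proj_form[OF assms] inner_diff_right
  by (simp add: left_diff_distrib sum_subtractf)

lemma proj_zero: assumes "finite X" "subspace_on X S"
  shows "proj_on X S (\<lambda>_. 0) = (\<lambda>_. 0)"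
  using proj_id[OF assms sub_zero[OF assms(2)]] .

lemma proj_cong: assumes "finite X" "subspace_on X S" "\<And>x. x \<in> X \<Longrightarrow> f x = g x"
  shows "proj_on X S f = proj_on X S g"
  unfolding proj_form[OF assms(1,2)] using inner_cong[of X _ _ f g] assms(3) by simp

lemma proj_nrm: assumes "finite X" "subspace_on X S"
  shows "nrm X (proj_on X S f) \<le> nrm X f"
proof -
  let ?p = "proj_on X S f"
  let ?r = "\<lambda>x. f x - ?p x"
  have pS: "?p \<in> S" using proj_in[OF assms] .
  have o: "inner_on X ?p ?r = 0" using proj_orth[OF assms pS] .
  have pf: "inner_on X ?p f = inner_on X ?p ?p" using o unfolding inner_diff_right by simp
  have "of_real (nrm X ?r) = inner_on X ?r ?r" by (simp add: inner_self)
  also have "\<dots> = inner_on X f ?r" using o unfolding inner_diff_left by simp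
  also have "\<dots> = inner_on X f f - cnj (inner_on X ?p f)" unfolding inner_diff_right
    by (metis inner_cnj)
  also have "\<dots> = of_real (nrm X f - nrm X ?p)" unfolding pf inner_self by simp
  finally have "nrm X ?r = nrm X f - nrm X ?p" using of_real_eq_iff by blast
  then show ?thesis using nrm_nonneg[of X ?r] by simp
qed

definition lin_on :: "('i \<Rightarrow> complex) set \<Rightarrow> (('i \<Rightarrow> complex) \<Rightarrow> ('j \<Rightarrow> complex)) \<Rightarrow> bool" where
  "lin_on S T \<longleftrightarrow> (\<forall>f\<in>S. \<forall>g\<in>S. T (\<lambda>y. f y + g y) = (\<lambda>y. T f y + T g y))
     \<and> (\<forall>c. \<forall>f\<in>S. T (\<lambda>y. c * f y) = (\<lambda>y. c * T f y))"

lemma lin_sum: assumes "subspace_on X S" "lin_on S T" "finite I" "\<And>i. i \<in> I \<Longrightarrow> h i \<in> S"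
  shows "T (\<lambda>y. \<Sum>i\<in>I. c i * h i y) = (\<lambda>y. \<Sum>i\<in>I. c i * T (h i) y)"
  using assms(3,4)
proof (induction I rule: finite_induct)
  case empty
  have "\<forall>c. \<forall>f\<in>S. T (\<lambda>y. c * f y) = (\<lambda>y. c * T f y)" using assms(2) unfolding lin_on_def by blast
  from bspec[OF spec[OF this, of 0] sub_zero[OF assms(1)]] show ?case by simp
next
  case (insert a F)
  have s1: "(\<lambda>y. c a * h a y) \<in> S" using insert assms(1) by (intro sub_scale) auto
  have s2: "(\<lambda>y. \<Sum>i\<in>F. c i * h i y) \<in> S" using insert assms(1) by (intro sub_sum) auto
  have ad: "\<forall>f\<in>S. \<forall>g\<in>S. T (\<lambda>y. f y + g y) = (\<lambda>y. T f y + T g y)"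
    and sc: "\<forall>c. \<forall>f\<in>S. T (\<lambda>y. c * f y) = (\<lambda>y. c * T f y)" using assms(2) unfolding lin_on_def by auto
  have "T (\<lambda>y. (\<lambda>y. c a * h a y) y + (\<lambda>y. \<Sum>i\<in>F. c i * h i y) y)
      = (\<lambda>y. T (\<lambda>y. c a * h a y) y + T (\<lambda>y. \<Sum>i\<in>F. c i * h i y) y)"
    by (rule bspec[OF bspec[OF ad s1] s2])
  also have "T (\<lambda>y. c a * h a y) = (\<lambda>y. c a * T (h a) y)"
    using insert by (intro bspec[OF spec[OF sc]]) auto
  finally show ?case using insert by simp
qed

lemma trace_formula: assumes "finite X" "subspace_on X S" "lin_on S T"
  shows "trace_on X S T = (\<Sum>x\<in>X. T (proj_on X S (\<lambda>y. if y = x then 1 else 0)) x)"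
proof -
  define B where "B = (SOME B. onb_on X S B)"
  have B: "onb_on X S B" unfolding B_def using someB[OF assms(1,2)] .
  have fB: "finite B" "B \<subseteq> S" using B unfolding onb_on_def by auto
  have ib: "inner_on X b (\<lambda>y. if y = x then 1 else 0) = cnj (b x)" if "x \<in> X" for b x
    unfolding inner_on_def using that assms(1) by (simp add: if_distrib cong: if_cong)
  have "(\<Sum>x\<in>X. T (proj_on X S (\<lambda>y. if y = x then 1 else 0)) x)
     = (\<Sum>x\<in>X. \<Sum>b\<in>B. cnj (b x) * T b x)"
  proof (intro sum.cong refl)
    fix x assume x: "x \<in> X"
    have pe: "proj_on X S (\<lambda>y. if y = x then 1 else 0) = (\<lambda>y. \<Sum>b\<in>B. cnj (b x) * b y)"
      unfolding proj_formula[OF B assms(2,1)] using ib[OF x] by simp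
    then show "T (proj_on X S (\<lambda>y. if y = x then 1 else 0)) x = (\<Sum>b\<in>B. cnj (b x) * T b x)"
    proof -
      have "T (\<lambda>y. \<Sum>i\<in>B. cnj (i x) * i y) = (\<lambda>y. \<Sum>i\<in>B. cnj (i x) * T i y)"
        using lin_sum[OF assms(2,3) fB(1), where h="\<lambda>b. b" and c="\<lambda>b. cnj (b x)"] fB(2) by blast
      then show ?thesis using pe by simp
    qed
  qed
  also have "\<dots> = (\<Sum>b\<in>B. inner_on X b (T b))"
    unfolding inner_on_def by (rule sum.swap)
  finally show ?thesis unfolding trace_on_def Let_def B_def by simp
qed

lemma trace_bound: assumes "finite X" "subspace_on X S"
  and "\<And>b. b \<in> S \<Longrightarrow> nrm X (T b) \<le> nrm X b"
  shows "cmod (trace_on X S T) \<le> real (card (SOME B. onb_on X S B) * card X)"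
proof -
  define B where "B = (SOME B. onb_on X S B)"
  have B: "onb_on X S B" unfolding B_def using someB[OF assms(1,2)] .
  have fB: "finite B" "B \<subseteq> S" using B unfolding onb_on_def by auto
  have n1: "nrm X b = 1" if "b \<in> B" for b
    using B that inner_self[of X b] unfolding onb_on_def by auto
  have le1: "cmod z \<le> 1" if "(cmod z)^2 \<le> 1" for z
    using that by (simp add: power_le_one_iff abs_square_le_1)
  have "cmod (trace_on X S T) = cmod (\<Sum>b\<in>B. inner_on X b (T b))"
    unfolding trace_on_def Let_def B_def by simp
  also have "\<dots> \<le> (\<Sum>b\<in>B. cmod (inner_on X b (T b)))" by (rule norm_sum)
  also have "\<dots> \<le> (\<Sum>b\<in>B. real (card X))"
  proof (intro sum_mono)
    fix b assume b: "b \<in> B"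
    have "cmod (inner_on X b (T b)) \<le> (\<Sum>x\<in>X. cmod (cnj (b x) * T b x))"
      unfolding inner_on_def by (rule norm_sum)
    also have "\<dots> \<le> (\<Sum>x\<in>X. 1)"
    proof (intro sum_mono)
      fix x assume x: "x \<in> X"
      have "(cmod (b x))^2 \<le> 1" using nrm_pt[OF assms(1) x, of b] n1[OF b] by simp
      moreover have "(cmod (T b x))^2 \<le> 1"
        using nrm_pt[OF assms(1) x, of "T b"] assms(3)[of b] n1[OF b] b fB by auto
      ultimately show "cmod (cnj (b x) * T b x) \<le> 1"
        using le1 by (simp add: norm_mult mult_le_one)
    qed
    finally show "cmod (inner_on X b (T b)) \<le> real (card X)" by simp
  qed
  finally show ?thesis unfolding B_def by simp
qed

lemma proj_add: assumes "finite X" "subspace_on X S"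
  shows "proj_on X S (\<lambda>y. f y + g y) = (\<lambda>y. proj_on X S f y + proj_on X S g y)"
proof -
  have "inner_on X b (\<lambda>y. f y + g y) = inner_on X b f + inner_on X b g" for b
    unfolding inner_on_def by (simp add: distrib_left sum.distrib)
  then show ?thesis unfolding proj_form[OF assms]
    by (simp add: distrib_right sum.distrib)
qed

lemma proj_scale: assumes "finite X" "subspace_on X S"
  shows "proj_on X S (\<lambda>y. c * f y) = (\<lambda>y. c * proj_on X S f y)"
  unfolding proj_form[OF assms] inner_scale_right
  by (simp add: sum_distrib_left mult.assoc)

lemma orth_uniq: assumes "finite X" "subspace_on X S" "g1 \<in> S" "g2 \<in> S"
  "\<forall>h\<in>S. inner_on X h (\<lambda>x. f x - g1 x) = 0" "\<forall>h\<in>S. inner_on X h (\<lambda>x. f x - g2 x) = 0"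
  shows "g1 = g2"
proof -
  let ?d = "\<lambda>x. g1 x - g2 x"
  have dS: "?d \<in> S" using sub_diff[OF assms(2) assms(3,4)] .
  have e: "(\<lambda>x. (f x - g2 x) - (f x - g1 x)) = ?d" by auto
  have "inner_on X ?d ?d = inner_on X ?d (\<lambda>x. (f x - g2 x) - (f x - g1 x))" by (simp only: e)
  also have "\<dots> = inner_on X ?d (\<lambda>x. f x - g2 x) - inner_on X ?d (\<lambda>x. f x - g1 x)"
    by (rule inner_diff_right)
  also have "\<dots> = 0"
  proof -
    have a: "inner_on X ?d (\<lambda>x. f x - g2 x) = 0" using assms(6) dS by blast
    have b: "inner_on X ?d (\<lambda>x. f x - g1 x) = 0" using assms(5) dS by blast
    show ?thesis by (simp only: a b diff_self)
  qed
  finally have "nrm X ?d = 0" by (simp add: inner_self)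
  then have z1: "\<forall>x\<in>X. ?d x = 0" by (rule iffD1[OF nrm_zero_iff[OF assms(1)]])
  show ?thesis
  proof (rule ext)
    fix x
    have "?d x = 0"
    proof (cases "x \<in> X")
      case True then show ?thesis using z1 by (rule bspec[rotated])
    next
      case False then show ?thesis by (rule sub_out[OF assms(2) dS])
    qed
    then show "g1 x = g2 x" by (simp only: right_minus_eq)
  qed
qed

lemma proj_unique: assumes "finite X" "subspace_on X S" "g \<in> S"
  "\<forall>h\<in>S. inner_on X h (\<lambda>x. f x - g x) = 0"
  shows "proj_on X S f = g"
  by (rule orth_uniq[OF assms(1,2) proj_in[OF assms(1,2)] assms(3) _ assms(4)])
     (use proj_orth[OF assms(1,2)] in blast)



locale gr =
  fixes V :: "'v set" and E :: "'e set" and d :: "'e \<Rightarrow> 'v \<times> 'v" and Gs :: "'v \<Rightarrow> ('e \<Rightarrow> complex) set"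
  assumes fsg: "finite_simple_graph V E d" and vs: "vertex_space V E d Gs"
begin

abbreviation "Ev \<equiv> edges_at E d"
abbreviation "PP v \<equiv> proj_on (Ev v) (Gs v)"
definition "N v = {w\<in>V. adj E d v w}"

lemma finV: "finite V" and finE: "finite E" using fsg unfolding finite_simple_graph_def by auto
lemma ends: "e \<in> E \<Longrightarrow> fst (d e) \<in> V \<and> snd (d e) \<in> V" using fsg unfolding finite_simple_graph_def by auto
lemma noloop: "e \<in> E \<Longrightarrow> fst (d e) \<noteq> snd (d e)" using fsg unfolding finite_simple_graph_def by auto
lemma simple: "e \<in> E \<Longrightarrow> e' \<in> E \<Longrightarrow> {fst (d e), snd (d e)} = {fst (d e'), snd (d e')} \<Longrightarrow> e = e'"
  using fsg unfolding finite_simple_graph_def by blast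

lemma Ev_iff: "e \<in> Ev v \<longleftrightarrow> e \<in> E \<and> (fst (d e) = v \<or> snd (d e) = v)"
  unfolding edges_at_def by auto
lemma finEv: "finite (Ev v)" using finE unfolding edges_at_def by auto
lemma subv: "v \<in> V \<Longrightarrow> subspace_on (Ev v) (Gs v)" using vs unfolding vertex_space_def by auto
lemma finN: "finite (N v)" using finV unfolding N_def by auto

lemma eb_eq: assumes "e \<in> E" "{fst (d e), snd (d e)} = {v,w}" shows "edge_betw E d v w = e"
  unfolding edge_betw_def
proof (rule the_equality)
  show "e \<in> E \<and> {fst (d e), snd (d e)} = {v, w}" using assms by simp
  fix x assume "x \<in> E \<and> {fst (d x), snd (d x)} = {v, w}"
  then show "x = e" using simple[of x e] assms by auto
qed

lemma adj_props: assumes "adj E d v w"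
  shows "edge_betw E d v w \<in> E" "{fst (d (edge_betw E d v w)), snd (d (edge_betw E d v w))} = {v,w}"
    "v \<noteq> w" "v \<in> V" "w \<in> V"
proof -
  obtain e where e: "e \<in> E" "{fst (d e), snd (d e)} = {v, w}" "v \<noteq> w"
    using assms unfolding adj_def by blast
  have eb: "edge_betw E d v w = e" using eb_eq e by blast
  show "edge_betw E d v w \<in> E" "{fst (d (edge_betw E d v w)), snd (d (edge_betw E d v w))} = {v,w}"
    "v \<noteq> w" using eb e by auto
  have "v \<in> {fst (d e), snd (d e)}" "w \<in> {fst (d e), snd (d e)}" using e by auto
  then show "v \<in> V" "w \<in> V" using ends[OF e(1)] by auto
qed

lemma eb_in: assumes "adj E d v w" shows "edge_betw E d v w \<in> Ev v" "edge_betw E d v w \<in> Ev w"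
  using adj_props[OF assms] unfolding Ev_iff by (auto simp: doubleton_eq_iff)

lemma other_eb: assumes "adj E d v w" shows "other_end d (edge_betw E d v w) v = w"
  using adj_props[OF assms] unfolding other_end_def by (auto simp: doubleton_eq_iff)

lemma other_props: assumes "e \<in> Ev v"
  shows "other_end d e v \<in> V" "adj E d v (other_end d e v)" "edge_betw E d v (other_end d e v) = e"
proof -
  have e: "e \<in> E" "fst (d e) = v \<or> snd (d e) = v" using assms Ev_iff by auto
  have ne: "fst (d e) \<noteq> snd (d e)" using noloop e(1) .
  have pr: "{fst (d e), snd (d e)} = {v, other_end d e v}" "v \<noteq> other_end d e v"
    using e ne unfolding other_end_def by auto
  show "other_end d e v \<in> V" using ends[OF e(1)] unfolding other_end_def by auto
  show "adj E d v (other_end d e v)" unfolding adj_def using e(1) pr by blast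
  show "edge_betw E d v (other_end d e v) = e" using eb_eq[OF e(1) pr(1)] .
qed

lemma sum_other: assumes "v \<in> V"
  shows "(if e' \<in> Ev v then F (other_end d e' v, e') else 0)
     = (\<Sum>w\<in>N v. A_max E d v w (\<lambda>e. F (w, e)) e')"
proof (cases "e' \<in> Ev v")
  case True
  let ?o = "other_end d e' v"
  have oN: "?o \<in> N v" using other_props[OF True] unfolding N_def by auto
  have "(\<Sum>w\<in>N v. A_max E d v w (\<lambda>e. F (w, e)) e') = (\<Sum>w\<in>N v. if w = ?o then F (w, e') else 0)"
  proof (intro sum.cong refl)
    fix w assume w: "w \<in> N v"
    then have a: "adj E d v w" unfolding N_def by auto
    have "e' = edge_betw E d v w \<longleftrightarrow> w = ?o"
      using other_eb[OF a] other_props(3)[OF True] by auto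
    then show "A_max E d v w (\<lambda>e. F (w, e)) e' = (if w = ?o then F (w, e') else 0)"
      unfolding A_max_def by simp
  qed
  also have "\<dots> = F (?o, e')" using oN finN by simp
  finally show ?thesis using True by simp
next
  case False
  have "A_max E d v w (\<lambda>e. F (w, e)) e' = 0" if "w \<in> N v" for w
    using eb_in(1)[of v w] that False unfolding N_def A_max_def by auto
  then show ?thesis using False by simp
qed


lemma idx_Sigma: "idx V E d = Sigma V Ev" unfolding idx_def by auto
lemma fin_idx: "finite (idx V E d)" unfolding idx_Sigma using finV finEv by auto

lemma vsp_sub: "subspace_on (idx V E d) (vspace V E d Gs)"
  unfolding subspace_on_def
proof (intro conjI ballI allI impI)
  show "(\<lambda>_. 0) \<in> vspace V E d Gs" unfolding vspace_def using sub_zero[OF subv] by auto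
  fix f assume f: "f \<in> vspace V E d Gs"
  {
    fix g assume g: "g \<in> vspace V E d Gs"
    show "(\<lambda>x. f x + g x) \<in> vspace V E d Gs" unfolding vspace_def
    proof (intro CollectI conjI ballI allI impI)
      fix v assume v: "v \<in> V"
      have "(\<lambda>x. (\<lambda>e. f (v, e)) x + (\<lambda>e. g (v, e)) x) \<in> Gs v"
        using f g v by (intro sub_add[OF subv[OF v]]) (auto simp: vspace_def)
      then show "(\<lambda>e. f (v, e) + g (v, e)) \<in> Gs v" by simp
    next
      fix v e assume "v \<notin> V" then show "f (v, e) + g (v, e) = 0" using f g by (simp add: vspace_def)
    qed
  }
  {
    fix c
    show "(\<lambda>x. c * f x) \<in> vspace V E d Gs" unfolding vspace_def
    proof (intro CollectI conjI ballI allI impI)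
      fix v assume v: "v \<in> V"
      have "(\<lambda>x. c * (\<lambda>e. f (v, e)) x) \<in> Gs v"
        using f v by (intro sub_scale[OF subv[OF v]]) (auto simp: vspace_def)
      then show "(\<lambda>e. c * f (v, e)) \<in> Gs v" by simp
    next
      fix v e assume "v \<notin> V" then show "c * f (v, e) = 0" using f by (simp add: vspace_def)
    qed
  }
  fix x assume x: "x \<notin> idx V E d"
  obtain v e where xe: "x = (v, e)" by force
  show "f x = 0"
  proof (cases "v \<in> V")
    case True
    then have "e \<notin> Ev v" using x xe unfolding idx_def by auto
    moreover have "(\<lambda>e. f (v, e)) \<in> Gs v" using f True by (simp add: vspace_def)
    ultimately show ?thesis using sub_out[OF subv[OF True]] xe by force
  next
    case False then show ?thesis using f xe by (simp add: vspace_def)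
  qed
qed

lemma vsp_out: "F \<in> vspace V E d Gs \<Longrightarrow> x \<notin> idx V E d \<Longrightarrow> F x = 0"
  using sub_out[OF vsp_sub] by blast

lemma vsp_pt: assumes "F \<in> vspace V E d Gs" shows "(cmod (F x))^2 \<le> nrm (idx V E d) F"
proof (cases "x \<in> idx V E d")
  case True then show ?thesis using nrm_pt[OF fin_idx] by blast
next
  case False then show ?thesis using vsp_out[OF assms False] nrm_nonneg[of "idx V E d" F] by simp
qed

definition AA :: "('v \<times> 'e \<Rightarrow> complex) \<Rightarrow> ('v \<times> 'e \<Rightarrow> complex)" where
  "AA F = (\<lambda>(v,e). if v \<in> V then PP v (\<lambda>e'. if e' \<in> Ev v then F (other_end d e' v, e') else 0) e else 0)"

lemma AA_in: "AA F \<in> vspace V E d Gs"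
  unfolding vspace_def AA_def using proj_in[OF finEv subv] by auto

lemma proj_sum1: assumes "finite X" "subspace_on X S"
  shows "proj_on X S (\<lambda>y. \<Sum>i\<in>I. h i y) = (\<lambda>y. \<Sum>i\<in>I. proj_on X S (h i) y)"
  using proj_sum[OF assms, where c="\<lambda>_. 1" and I=I and h=h] by simp

lemma blk_AA: assumes "v \<in> V"
  shows "(\<lambda>e. AA F (v, e)) = (\<lambda>e. \<Sum>w\<in>N v. A_G E d Gs v w (\<lambda>e. F (w, e)) e)"
proof -
  have "(\<lambda>e. AA F (v, e)) = PP v (\<lambda>e'. if e' \<in> Ev v then F (other_end d e' v, e') else 0)"
    unfolding AA_def using assms by simp
  also have "(\<lambda>e'. if e' \<in> Ev v then F (other_end d e' v, e') else 0)
      = (\<lambda>e'. \<Sum>w\<in>N v. A_max E d v w (\<lambda>e. F (w, e)) e')"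
    using sum_other[OF assms] by (intro ext) blast
  also have "PP v \<dots> = (\<lambda>e. \<Sum>w\<in>N v. A_G E d Gs v w (\<lambda>e. F (w, e)) e)"
    unfolding A_G_def by (rule proj_sum1[OF finEv subv[OF assms]])
  finally show ?thesis .
qed

lemma lap_eq: assumes "F \<in> vspace V E d Gs"
  shows "disc_lap V E d Gs F = (\<lambda>x. F x - AA F x)"
proof (rule ext)
  fix x :: "'v \<times> 'e" obtain v e where xe: "x = (v, e)" by force
  show "disc_lap V E d Gs F x = F x - AA F x"
  proof (cases "v \<in> V")
    case True
    have bF: "(\<lambda>e. F (v, e)) \<in> Gs v" using assms True by (simp add: vspace_def)
    have "(\<lambda>e'. if e' \<in> Ev v then F (v, e') - F (other_end d e' v, e') else 0)
       = (\<lambda>e'. (\<lambda>e. F (v, e)) e' - (\<lambda>e'. if e' \<in> Ev v then F (other_end d e' v, e') else 0) e')"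
      using sub_out[OF subv[OF True] bF] by (intro ext) auto
    then have "disc_lap V E d Gs F (v, e)
       = PP v (\<lambda>e'. (\<lambda>e. F (v, e)) e' - (\<lambda>e'. if e' \<in> Ev v then F (other_end d e' v, e') else 0) e') e"
      unfolding disc_lap_def using True by simp
    also have "\<dots> = F (v, e) - AA F (v, e)"
      unfolding proj_diff[OF finEv subv[OF True]] proj_id[OF finEv subv[OF True] bF]
      unfolding AA_def using True by simp
    finally show ?thesis using xe by simp
  next
    case False then show ?thesis using assms xe unfolding disc_lap_def AA_def vspace_def by simp
  qed
qed

lemma AA_sum: "AA (\<lambda>x. \<Sum>i\<in>I. c i * H i x) = (\<lambda>x. \<Sum>i\<in>I. c i * AA (H i) x)"
proof (rule ext)
  fix x :: "'v \<times> 'e" obtain v e where xe: "x = (v, e)" by force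
  show "AA (\<lambda>x. \<Sum>i\<in>I. c i * H i x) x = (\<Sum>i\<in>I. c i * AA (H i) x)"
  proof (cases "v \<in> V")
    case True
    have "(\<lambda>e'. if e' \<in> Ev v then \<Sum>i\<in>I. c i * H i (other_end d e' v, e') else 0)
      = (\<lambda>e'. \<Sum>i\<in>I. c i * (\<lambda>e'. if e' \<in> Ev v then H i (other_end d e' v, e') else 0) e')"
      by (intro ext) (simp add: if_distrib[of "\<lambda>z. c _ * z"] sum.If_cases)
    then show ?thesis unfolding AA_def using True xe
      by (simp add: proj_sum[OF finEv subv[OF True]])
  next
    case False then show ?thesis unfolding AA_def using xe by simp
  qed
qed

lemma AA_add: "AA (\<lambda>x. F x + G x) = (\<lambda>x. AA F x + AA G x)"
  using AA_sum[where c="\<lambda>_. 1" and I="{True, False}" and H="\<lambda>b. if b then F else G"] by simp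

lemma AA_scale: "AA (\<lambda>x. c * F x) = (\<lambda>x. c * AA F x)"
  using AA_sum[where c="\<lambda>_. c" and I="{()}" and H="\<lambda>_. F"] by simp

lemma AApow_sum: "(AA ^^ j) (\<lambda>x. \<Sum>i\<in>I. c i * H i x) = (\<lambda>x. \<Sum>i\<in>I. c i * (AA ^^ j) (H i) x)"
  by (induction j) (simp_all add: AA_sum)

lemma AApow_add: "(AA ^^ j) (\<lambda>x. F x + G x) = (\<lambda>x. (AA ^^ j) F x + (AA ^^ j) G x)"
  by (induction j) (simp_all add: AA_add)

lemma AApow_scale: "(AA ^^ j) (\<lambda>x. c * F x) = (\<lambda>x. c * (AA ^^ j) F x)"
  by (induction j) (simp_all add: AA_scale)

lemma AApow_in: "F \<in> vspace V E d Gs \<Longrightarrow> (AA ^^ j) F \<in> vspace V E d Gs"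
  by (cases j) (simp_all add: AA_in)

lemma nrm_idx: "nrm (idx V E d) G = (\<Sum>v\<in>V. nrm (Ev v) (\<lambda>e. G (v, e)))"
  unfolding nrm_def idx_Sigma using finV finEv by (simp add: sum.Sigma)

lemma AA_nrm: assumes "F \<in> vspace V E d Gs"
  shows "nrm (idx V E d) (AA F) \<le> real (card (idx V E d)) * nrm (idx V E d) F"
proof -
  let ?n = "nrm (idx V E d) F"
  have "nrm (idx V E d) (AA F) = (\<Sum>v\<in>V. nrm (Ev v) (PP v (\<lambda>e'. if e' \<in> Ev v then F (other_end d e' v, e') else 0)))"
    unfolding nrm_idx by (intro sum.cong refl) (simp add: AA_def)
  also have "\<dots> \<le> (\<Sum>v\<in>V. nrm (Ev v) (\<lambda>e'. if e' \<in> Ev v then F (other_end d e' v, e') else 0))"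
    by (intro sum_mono proj_nrm[OF finEv subv])
  also have "\<dots> \<le> (\<Sum>v\<in>V. real (card (Ev v)) * ?n)"
  proof (intro sum_mono)
    fix v
    have "nrm (Ev v) (\<lambda>e'. if e' \<in> Ev v then F (other_end d e' v, e') else 0) \<le> (\<Sum>e\<in>Ev v. ?n)"
      unfolding nrm_def[of "Ev v"] by (intro sum_mono) (simp add: vsp_pt[OF assms])
    then show "nrm (Ev v) (\<lambda>e'. if e' \<in> Ev v then F (other_end d e' v, e') else 0) \<le> real (card (Ev v)) * ?n"
      by simp
  qed
  also have "\<dots> = real (card (idx V E d)) * ?n"
    unfolding idx_Sigma using finV finEv by (simp add: card_SigmaI sum_distrib_right)
  finally show ?thesis .
qed

lemma AApow_nrm: assumes "F \<in> vspace V E d Gs"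
  shows "nrm (idx V E d) ((AA ^^ j) F) \<le> real (card (idx V E d)) ^ j * nrm (idx V E d) F"
proof (induction j)
  case 0 then show ?case by simp
next
  case (Suc j)
  have "nrm (idx V E d) ((AA ^^ Suc j) F) \<le> real (card (idx V E d)) * nrm (idx V E d) ((AA ^^ j) F)"
    using AA_nrm[OF AApow_in[OF assms]] by simp
  also have "\<dots> \<le> real (card (idx V E d)) * (real (card (idx V E d)) ^ j * nrm (idx V E d) F)"
    by (intro mult_left_mono Suc) auto
  finally show ?case by (simp add: mult.assoc)
qed

end

lemma pascal_sum:
  fixes a :: "nat \<Rightarrow> complex"
  shows "(\<Sum>j\<le>Suc k. of_nat (Suc k choose j) * (-1)^j * a j)
       = (\<Sum>j\<le>k. of_nat (k choose j) * (-1)^j * a j) - (\<Sum>j\<le>k. of_nat (k choose j) * (-1)^j * a (Suc j))"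
proof -
  have s1: "(\<Sum>j\<le>Suc k. of_nat (Suc k choose j) * (-1)^j * a j)
      = a 0 + (\<Sum>j\<le>k. of_nat (Suc k choose Suc j) * (-1)^(Suc j) * a (Suc j))"
    by (subst sum.atMost_Suc_shift) simp
  have s2: "(\<Sum>j\<le>k. of_nat (k choose j) * (-1)^j * a j) = (\<Sum>j\<le>Suc k. of_nat (k choose j) * (-1)^j * a j)"
    by simp
  also have "\<dots> = a 0 + (\<Sum>j\<le>k. of_nat (k choose Suc j) * (-1)^(Suc j) * a (Suc j))"
    by (subst sum.atMost_Suc_shift) simp
  finally have s2': "(\<Sum>j\<le>k. of_nat (k choose j) * (-1)^j * a j) = a 0 + (\<Sum>j\<le>k. of_nat (k choose Suc j) * (-1)^(Suc j) * a (Suc j))" .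
  have "(\<Sum>j\<le>k. of_nat (Suc k choose Suc j) * (-1)^(Suc j) * a (Suc j))
      = (\<Sum>j\<le>k. of_nat (k choose Suc j) * (-1)^(Suc j) * a (Suc j)) - (\<Sum>j\<le>k. of_nat (k choose j) * (-1)^j * a (Suc j))"
    unfolding sum_subtractf[symmetric] by (intro sum.cong refl) (simp add: algebra_simps)
  then show ?thesis using s1 s2' by simp
qed
lemma cauchy_term:
  fixes \<tau> :: complex and y :: "nat \<Rightarrow> complex"
  shows "(-\<tau>)^k / fact k * (\<Sum>j\<le>k. of_nat (k choose j) * (-1)^j * y j)
    = (\<Sum>i\<le>k. ((-\<tau>)^i / fact i) * (\<tau>^(k-i) / fact (k-i) * y (k-i)))"
proof -
  have "(\<Sum>i\<le>k. ((-\<tau>)^i / fact i) * (\<tau>^(k-i) / fact (k-i) * y (k-i)))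
      = (\<Sum>j\<le>k. ((-\<tau>)^(k-j) / fact (k-j)) * (\<tau>^(k-(k-j)) / fact (k-(k-j)) * y (k-(k-j))))"
    using sum.atLeastAtMost_rev[of "\<lambda>i. ((-\<tau>)^i / fact i) * (\<tau>^(k-i) / fact (k-i) * y (k-i))" 0 k]
    by (simp add: atLeast0AtMost)
  also have "\<dots> = (\<Sum>j\<le>k. (-\<tau>)^k / fact k * (of_nat (k choose j) * (-1)^j * y j))"
  proof (intro sum.cong refl)
    fix j assume "j \<in> {..k}" then have j: "j \<le> k" by simp
    have p: "(-\<tau>)^k = (-\<tau>)^(k-j) * (-\<tau>)^j" using j by (simp add: power_add[symmetric])
    have q: "(-\<tau>)^j * (-1)^j = \<tau>^j" by (simp add: power_mult_distrib[symmetric])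
    have "(-\<tau>)^k / fact k * (of_nat (k choose j) * (-1)^j * y j)
        = (-\<tau>)^(k-j) * ((-\<tau>)^j * (-1)^j) / (fact j * fact (k-j)) * y j"
      unfolding binomial_fact[OF j] p by (simp add: field_simps)
    then show "((-\<tau>)^(k-j) / fact (k-j)) * (\<tau>^(k-(k-j)) / fact (k-(k-j)) * y (k-(k-j)))
        = (-\<tau>)^k / fact k * (of_nat (k choose j) * (-1)^j * y j)"
      unfolding q using j by (simp add: field_simps) (simp add: eq_commute[of "fact k * _"])
  qed
  finally show ?thesis by (simp add: sum_distrib_left)
qed

context gr begin

definition MM :: "real \<Rightarrow> ('v \<times> 'e \<Rightarrow> complex) \<Rightarrow> ('v \<times> 'e \<Rightarrow> complex)" where
  "MM t F = (\<lambda>x. complex_of_real (- t) * disc_lap V E d Gs F x)"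

lemma MMpow: assumes F: "F \<in> vspace V E d Gs"
  shows "(MM t ^^ k) F = (\<lambda>x. (complex_of_real (-t))^k * (\<Sum>j\<le>k. of_nat (k choose j) * (-1)^j * (AA^^j) F x))"
proof (induction k)
  case 0 show ?case by simp
next
  case (Suc k)
  let ?S = "\<lambda>x. \<Sum>j\<le>k. of_nat (k choose j) * (-1)^j * (AA^^j) F x"
  let ?S' = "\<lambda>x. \<Sum>j\<le>k. of_nat (k choose j) * (-1)^j * (AA^^Suc j) F x"
  let ?c = "(complex_of_real (-t))^k"
  have Sin: "?S \<in> vspace V E d Gs"
    using sub_sum[OF vsp_sub, where I="{..k}" and h="\<lambda>j. (AA^^j) F" and c="\<lambda>j. of_nat (k choose j) * (-1)^j"]
      AApow_in[OF F] by simp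
  have Gin: "(\<lambda>x. ?c * ?S x) \<in> vspace V E d Gs" using sub_scale[OF vsp_sub Sin] .
  have AAG: "AA (\<lambda>x. ?c * ?S x) = (\<lambda>x. ?c * ?S' x)"
    by (simp add: AA_scale AA_sum)
  have "(MM t ^^ Suc k) F = MM t (\<lambda>x. ?c * ?S x)" using Suc by simp
  also have "\<dots> = (\<lambda>x. complex_of_real (-t) * (?c * ?S x - ?c * ?S' x))"
    unfolding MM_def lap_eq[OF Gin] AAG ..
  also have "\<dots> = (\<lambda>x. (complex_of_real (-t))^Suc k * (?S x - ?S' x))"
    by (simp add: algebra_simps)
  also have "\<dots> = (\<lambda>x. (complex_of_real (-t))^Suc k * (\<Sum>j\<le>Suc k. of_nat (Suc k choose j) * (-1)^j * (AA^^j) F x))"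
    using pascal_sum[of k "\<lambda>j. (AA^^j) F _"] by simp
  finally show ?case .
qed

lemma AApow_bound: assumes F: "F \<in> vspace V E d Gs"
  shows "cmod ((AA^^j) F x) \<le> sqrt (real (card (idx V E d))) ^ j * sqrt (nrm (idx V E d) F)"
proof -
  have "(cmod ((AA^^j) F x))^2 \<le> real (card (idx V E d)) ^ j * nrm (idx V E d) F"
    using vsp_pt[OF AApow_in[OF F]] AApow_nrm[OF F] order_trans by blast
  then have "sqrt ((cmod ((AA^^j) F x))^2) \<le> sqrt (real (card (idx V E d)) ^ j * nrm (idx V E d) F)"
    by (rule real_sqrt_le_mono)
  then show ?thesis by (simp add: real_sqrt_mult real_sqrt_power)
qed

lemma bser_summable: assumes F: "F \<in> vspace V E d Gs"
  shows "summable (\<lambda>j. norm (complex_of_real (t^j / fact j) * (AA^^j) F x))"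
proof (rule summable_comparison_test'[where N=0])
  let ?q = "sqrt (real (card (idx V E d)))"
  show "summable (\<lambda>j. sqrt (nrm (idx V E d) F) * norm ((\<bar>t\<bar> * ?q)^j /\<^sub>R fact j))"
    by (intro summable_mult summable_norm_exp)
  fix j :: nat
  have "norm (norm (complex_of_real (t^j / fact j) * (AA^^j) F x)) = \<bar>t\<bar>^j / fact j * cmod ((AA^^j) F x)"
    by (simp add: norm_mult norm_divide norm_power power_abs)
  also have "\<dots> \<le> \<bar>t\<bar>^j / fact j * (?q ^ j * sqrt (nrm (idx V E d) F))"
    by (intro mult_left_mono AApow_bound[OF F]) auto
  also have "\<dots> = sqrt (nrm (idx V E d) F) * norm ((\<bar>t\<bar> * ?q)^j /\<^sub>R fact j)"
    by (simp add: power_mult_distrib abs_mult divide_inverse)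
  finally show "norm (norm (complex_of_real (t^j / fact j) * (AA^^j) F x))
     \<le> sqrt (nrm (idx V E d) F) * norm ((\<bar>t\<bar> * ?q)^j /\<^sub>R fact j)" .
qed

lemma aser: "(\<lambda>i. complex_of_real ((-t)^i / fact i)) sums complex_of_real (exp (-t))"
  and aser_norm: "summable (\<lambda>i. norm (complex_of_real ((-t)^i / fact i)))"
proof -
  have "(\<lambda>n. (-t)^n /\<^sub>R fact n) sums exp (-t)" by (rule exp_converges)
  then have "(\<lambda>n. (-t)^n / fact n) sums exp (-t)" by (simp add: divide_inverse mult.commute)
  then show "(\<lambda>i. complex_of_real ((-t)^i / fact i)) sums complex_of_real (exp (-t))"
    by (rule sums_of_real)
  have "summable (\<lambda>n. norm ((-t)^n /\<^sub>R fact n))" by (rule summable_norm_exp)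
  moreover have "norm (complex_of_real ((-t)^i / fact i)) = norm ((-t)^i /\<^sub>R fact i)" for i
    unfolding norm_of_real real_norm_def by (simp add: divide_inverse mult.commute)
  ultimately show "summable (\<lambda>i. norm (complex_of_real ((-t)^i / fact i)))" by simp
qed

lemma heat_pt: assumes F: "F \<in> vspace V E d Gs"
  shows "(\<lambda>k. (MM t ^^ k) F x / of_nat (fact k)) sums
     (complex_of_real (exp (-t)) * (\<Sum>j. complex_of_real (t^j / fact j) * (AA^^j) F x))"
proof -
  let ?a = "\<lambda>i. complex_of_real ((-t)^i / fact i)"
  let ?b = "\<lambda>j. complex_of_real (t^j / fact j) * (AA^^j) F x"
  have cp: "(\<lambda>k. \<Sum>i\<le>k. ?a i * ?b (k - i)) sums ((\<Sum>k. ?a k) * (\<Sum>k. ?b k))"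
    by (rule Cauchy_product_sums[OF aser_norm bser_summable[OF F]])
  have eq: "(MM t ^^ k) F x / of_nat (fact k) = (\<Sum>i\<le>k. ?a i * ?b (k - i))" for k
  proof -
    have "(MM t ^^ k) F x / of_nat (fact k)
      = (-complex_of_real t)^k / fact k * (\<Sum>j\<le>k. of_nat (k choose j) * (-1)^j * (AA^^j) F x)"
      unfolding MMpow[OF F] by simp
    also have "\<dots> = (\<Sum>i\<le>k. ((-complex_of_real t)^i / fact i) *
        ((complex_of_real t)^(k-i) / fact (k-i) * (AA^^(k-i)) F x))"
      by (rule cauchy_term)
    also have "\<dots> = (\<Sum>i\<le>k. ?a i * ?b (k - i))" by simp
    finally show ?thesis .
  qed
  show ?thesis using cp unfolding eq sums_unique[OF aser, symmetric] .
qed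


lemma bser_summable': assumes F: "F \<in> vspace V E d Gs"
  shows "summable (\<lambda>j. complex_of_real (t^j / fact j) * (AA^^j) F x)"
  using summable_norm_cancel[OF bser_summable[OF F]] .

lemma opexp_eq: assumes F: "F \<in> vspace V E d Gs"
  shows "op_exp (MM t) F = (\<lambda>x. complex_of_real (exp (-t)) * (\<Sum>j. complex_of_real (t^j / fact j) * (AA^^j) F x))"
  unfolding op_exp_def using sums_unique[OF heat_pt[OF F]] by (intro ext) simp

lemma opexp_lin: "lin_on (vspace V E d Gs) (op_exp (MM t))"
  unfolding lin_on_def
proof (intro conjI ballI allI)
  fix f g assume f: "f \<in> vspace V E d Gs" and g: "g \<in> vspace V E d Gs"
  have fg: "(\<lambda>y. f y + g y) \<in> vspace V E d Gs" using sub_add[OF vsp_sub f g] .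
  show "op_exp (MM t) (\<lambda>y. f y + g y) = (\<lambda>y. op_exp (MM t) f y + op_exp (MM t) g y)"
    unfolding opexp_eq[OF fg] opexp_eq[OF f] opexp_eq[OF g] AApow_add
  proof (intro ext)
    fix x
    have "(\<Sum>j. complex_of_real (t ^ j / fact j) * ((AA ^^ j) f x + (AA ^^ j) g x))
      = (\<Sum>j. complex_of_real (t ^ j / fact j) * (AA ^^ j) f x + complex_of_real (t ^ j / fact j) * (AA ^^ j) g x)"
      by (simp only: distrib_left)
    also have "\<dots> = (\<Sum>j. complex_of_real (t ^ j / fact j) * (AA ^^ j) f x) + (\<Sum>j. complex_of_real (t ^ j / fact j) * (AA ^^ j) g x)"
      by (rule suminf_add[OF bser_summable'[OF f] bser_summable'[OF g], symmetric])
    finally show "complex_of_real (exp (- t)) * (\<Sum>j. complex_of_real (t ^ j / fact j) * ((AA ^^ j) f x + (AA ^^ j) g x))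
      = complex_of_real (exp (- t)) * (\<Sum>j. complex_of_real (t ^ j / fact j) * (AA ^^ j) f x) +
        complex_of_real (exp (- t)) * (\<Sum>j. complex_of_real (t ^ j / fact j) * (AA ^^ j) g x)"
      by (simp only: distrib_left)
  qed
next
  fix c f assume f: "f \<in> vspace V E d Gs"
  have cf: "(\<lambda>y. c * f y) \<in> vspace V E d Gs" using sub_scale[OF vsp_sub f] .
  show "op_exp (MM t) (\<lambda>y. c * f y) = (\<lambda>y. c * op_exp (MM t) f y)"
    unfolding opexp_eq[OF cf] opexp_eq[OF f] AApow_scale
  proof (intro ext)
    fix x
    have "(\<Sum>j. complex_of_real (t ^ j / fact j) * (c * (AA ^^ j) f x))
        = (\<Sum>j. c * (complex_of_real (t ^ j / fact j) * (AA ^^ j) f x))"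
      by (simp add: mult.left_commute)
    also have "\<dots> = c * (\<Sum>j. complex_of_real (t ^ j / fact j) * (AA ^^ j) f x)"
      by (rule suminf_mult[OF bser_summable'[OF f]])
    finally show "complex_of_real (exp (- t)) * (\<Sum>j. complex_of_real (t ^ j / fact j) * (c * (AA ^^ j) f x)) =
         c * (complex_of_real (exp (- t)) * (\<Sum>j. complex_of_real (t ^ j / fact j) * (AA ^^ j) f x))"
      by simp
  qed
qed

definition tau :: "nat \<Rightarrow> complex" where
  "tau j = (\<Sum>x\<in>idx V E d. (AA^^j) (proj_on (idx V E d) (vspace V E d Gs) (\<lambda>y. if y = x then 1 else 0)) x)"

lemma heat_formula:
  shows "summable (\<lambda>j. complex_of_real (t^j / fact j) * tau j)"
    and "heat_trace V E d Gs t = complex_of_real (exp (-t)) * (\<Sum>j. complex_of_real (t^j / fact j) * tau j)"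
proof -
  let ?P = "\<lambda>x. proj_on (idx V E d) (vspace V E d Gs) (\<lambda>y. if y = x then 1 else 0)"
  have Pin: "?P x \<in> vspace V E d Gs" for x using proj_in[OF fin_idx vsp_sub] .
  have sm: "summable (\<lambda>j. complex_of_real (t^j / fact j) * (AA^^j) (?P x) x)" for x
    using bser_summable'[OF Pin] .
  have te: "(\<lambda>j. complex_of_real (t^j / fact j) * tau j)
      = (\<lambda>j. \<Sum>x\<in>idx V E d. complex_of_real (t^j / fact j) * (AA^^j) (?P x) x)"
    unfolding tau_def by (simp add: sum_distrib_left)
  show "summable (\<lambda>j. complex_of_real (t^j / fact j) * tau j)"
    unfolding te by (intro summable_sum sm)
  have "heat_trace V E d Gs t = trace_on (idx V E d) (vspace V E d Gs) (op_exp (MM t))"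
    unfolding heat_trace_def MM_def ..
  also have "\<dots> = (\<Sum>x\<in>idx V E d. op_exp (MM t) (?P x) x)"
    by (rule trace_formula[OF fin_idx vsp_sub opexp_lin])
  also have "\<dots> = (\<Sum>x\<in>idx V E d. complex_of_real (exp (-t)) * (\<Sum>j. complex_of_real (t^j / fact j) * (AA^^j) (?P x) x))"
    by (intro sum.cong refl) (simp add: opexp_eq[OF Pin])
  also have "\<dots> = complex_of_real (exp (-t)) * (\<Sum>x\<in>idx V E d. (\<Sum>j. complex_of_real (t^j / fact j) * (AA^^j) (?P x) x))"
    by (simp only: sum_distrib_left)
  also have "\<dots> = complex_of_real (exp (-t)) * (\<Sum>j. \<Sum>x\<in>idx V E d. complex_of_real (t^j / fact j) * (AA^^j) (?P x) x)"
    by (simp only: suminf_sum[OF sm])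
  also have "\<dots> = complex_of_real (exp (-t)) * (\<Sum>j. complex_of_real (t^j / fact j) * tau j)"
    by (simp only: te)
  finally show "heat_trace V E d Gs t = complex_of_real (exp (-t)) * (\<Sum>j. complex_of_real (t^j / fact j) * tau j)" .
qed

end

context gr begin

fun prodw :: "'v \<Rightarrow> 'v list \<Rightarrow> ('e \<Rightarrow> complex) \<Rightarrow> ('e \<Rightarrow> complex)" where
  "prodw w [] = id"
| "prodw w (u # us) = A_G E d Gs w u \<circ> prodw u us"

definition walks :: "nat \<Rightarrow> 'v \<Rightarrow> 'v list set" where
  "walks j w = {us. length us = j \<and> set us \<subseteq> V \<and> (\<forall>i<j. adj E d ((w#us)!i) ((w#us)!Suc i))}"

lemma fin_walks: "finite (walks j w)"
  by (rule finite_subset[OF _ finite_lists_length_eq[OF finV, of j]]) (auto simp: walks_def)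

lemma walks_0: "walks 0 w = {[]}" by (auto simp: walks_def)

lemma walks_Suc: "walks (Suc j) w = (\<lambda>(u, us). u # us) ` (SIGMA u:N w. walks j u)"
proof
  show "walks (Suc j) w \<subseteq> (\<lambda>(u, us). u # us) ` (SIGMA u:N w. walks j u)"
  proof
    fix xs assume xs: "xs \<in> walks (Suc j) w"
    then obtain u us where xe: "xs = u # us" by (cases xs) (auto simp: walks_def)
    have A: "\<forall>i<Suc j. adj E d ((w#xs)!i) ((w#xs)!Suc i)" and L: "length us = j" and S: "set (u#us) \<subseteq> V"
      using xs xe by (auto simp: walks_def)
    have "adj E d w u" using A[rule_format, of 0] xe by simp
    then have uN: "u \<in> N w" using S unfolding N_def by auto
    have "\<forall>i<j. adj E d ((u#us)!i) ((u#us)!Suc i)"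
    proof (intro allI impI)
      fix i assume "i < j"
      then show "adj E d ((u#us)!i) ((u#us)!Suc i)" using A[rule_format, of "Suc i"] xe by simp
    qed
    then have "us \<in> walks j u" using L S by (auto simp: walks_def)
    then show "xs \<in> (\<lambda>(u, us). u # us) ` (SIGMA u:N w. walks j u)" using uN xe by force
  qed
next
  show "(\<lambda>(u, us). u # us) ` (SIGMA u:N w. walks j u) \<subseteq> walks (Suc j) w"
  proof
    fix xs assume "xs \<in> (\<lambda>(u, us). u # us) ` (SIGMA u:N w. walks j u)"
    then obtain u us where xe: "xs = u # us" and uN: "u \<in> N w" and us: "us \<in> walks j u" by auto
    have A: "\<forall>i<j. adj E d ((u#us)!i) ((u#us)!Suc i)" using us by (simp add: walks_def)
    have "\<forall>i<Suc j. adj E d ((w#xs)!i) ((w#xs)!Suc i)"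
    proof (intro allI impI)
      fix i assume i: "i < Suc j"
      show "adj E d ((w#xs)!i) ((w#xs)!Suc i)"
      proof (cases i)
        case 0 then show ?thesis using uN xe unfolding N_def by simp
      next
        case (Suc i') then show ?thesis using A i xe by simp
      qed
    qed
    then show "xs \<in> walks (Suc j) w" using xe uN us unfolding walks_def N_def by auto
  qed
qed

lemma sum_walks_Suc: "(\<Sum>us\<in>walks (Suc j) w. g us) = (\<Sum>u\<in>N w. \<Sum>us\<in>walks j u. g (u # us))"
proof -
  have inj: "inj_on (\<lambda>(u, us). u # us) (SIGMA u:N w. walks j u)" by (auto simp: inj_on_def)
  have "(\<Sum>us\<in>walks (Suc j) w. g us) = (\<Sum>p\<in>(SIGMA u:N w. walks j u). g (case p of (u, us) \<Rightarrow> u # us))"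
    unfolding walks_Suc by (subst sum.reindex[OF inj]) (simp add: comp_def)
  also have "\<dots> = (\<Sum>u\<in>N w. \<Sum>us\<in>walks j u. g (u # us))"
    using sum.Sigma[OF finN, where B="walks j" and g="\<lambda>u us. g (u # us)"] fin_walks by (simp add: prod.case_distrib)
  finally show ?thesis .
qed

lemma A_max_sum: "A_max E d v w (\<lambda>y. \<Sum>i\<in>I. c i * h i y) = (\<lambda>y. \<Sum>i\<in>I. c i * A_max E d v w (h i) y)"
  unfolding A_max_def by (intro ext) simp

lemma A_G_sum: assumes "v \<in> V"
  shows "A_G E d Gs v w (\<lambda>y. \<Sum>i\<in>I. c i * h i y) = (\<lambda>y. \<Sum>i\<in>I. c i * A_G E d Gs v w (h i) y)"
  unfolding A_G_def A_max_sum by (rule proj_sum[OF finEv subv[OF assms]])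

lemma prodw_sum: assumes "w \<in> V" "set us \<subseteq> V"
  shows "prodw w us (\<lambda>y. \<Sum>i\<in>I. c i * h i y) = (\<lambda>y. \<Sum>i\<in>I. c i * prodw w us (h i) y)"
  using assms
proof (induction us arbitrary: w)
  case Nil then show ?case by simp
next
  case (Cons u us)
  then show ?case by (simp add: A_G_sum)
qed

lemma prodw_lin: assumes "w \<in> V" "set us \<subseteq> V" shows "lin_on S (prodw w us)"
  unfolding lin_on_def
proof (intro conjI ballI allI)
  fix f g
  show "prodw w us (\<lambda>y. f y + g y) = (\<lambda>y. prodw w us f y + prodw w us g y)"
    using prodw_sum[OF assms, where c="\<lambda>_. 1" and I="{True, False}" and h="\<lambda>b. if b then f else g"] by simp
next
  fix c f
  show "prodw w us (\<lambda>y. c * f y) = (\<lambda>y. c * prodw w us f y)"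
    using prodw_sum[OF assms, where c="\<lambda>_. c" and I="{()}" and h="\<lambda>_. f"] by simp
qed

lemma prodw_zero: assumes "w \<in> V" "set us \<subseteq> V" shows "prodw w us (\<lambda>_. 0) = (\<lambda>_. 0)"
  using prodw_sum[OF assms, where I="{}"] by simp

lemma walk_exp: assumes "w \<in> V"
  shows "(\<lambda>e. (AA^^j) F (w, e)) = (\<lambda>e. \<Sum>us\<in>walks j w. prodw w us (\<lambda>e. F (last (w#us), e)) e)"
  using assms
proof (induction j arbitrary: w)
  case 0 then show ?case by (simp add: walks_0)
next
  case (Suc j)
  have "(\<lambda>e. (AA^^Suc j) F (w, e)) = (\<lambda>e. AA ((AA^^j) F) (w, e))" by simp
  also have "\<dots> = (\<lambda>e. \<Sum>u\<in>N w. A_G E d Gs w u (\<lambda>e. (AA^^j) F (u, e)) e)"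
    by (rule blk_AA[OF Suc.prems])
  also have "\<dots> = (\<lambda>e. \<Sum>u\<in>N w. A_G E d Gs w u (\<lambda>e. \<Sum>us\<in>walks j u. prodw u us (\<lambda>e. F (last (u#us), e)) e) e)"
    using Suc.IH unfolding N_def by (intro ext sum.cong refl) auto
  also have "\<dots> = (\<lambda>e. \<Sum>u\<in>N w. \<Sum>us\<in>walks j u. prodw w (u#us) (\<lambda>e. F (last (w#u#us), e)) e)"
  proof -
    have "A_G E d Gs w u (\<lambda>e. \<Sum>us\<in>walks j u. prodw u us (\<lambda>e. F (last (u#us), e)) e)
       = (\<lambda>e. \<Sum>us\<in>walks j u. A_G E d Gs w u (prodw u us (\<lambda>e. F (last (u#us), e))) e)" for u
      using A_G_sum[OF Suc.prems, where w=u and c="\<lambda>_. 1" and I="walks j u"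
        and h="\<lambda>us. prodw u us (\<lambda>e. F (last (u#us), e))"] by simp
    then show ?thesis by simp
  qed
  also have "\<dots> = (\<lambda>e. \<Sum>us\<in>walks (Suc j) w. prodw w us (\<lambda>e. F (last (w#us), e)) e)"
    by (simp only: sum_walks_Suc)
  finally show ?case .
qed


definition emb :: "'v \<Rightarrow> ('e \<Rightarrow> complex) \<Rightarrow> ('v \<times> 'e \<Rightarrow> complex)" where
  "emb v g = (\<lambda>(w, e). if w = v then g e else 0)"

lemma proj_delta: assumes "v \<in> V"
  shows "proj_on (idx V E d) (vspace V E d Gs) (\<lambda>y. if y = (v, e) then 1 else 0)
     = emb v (PP v (\<lambda>e'. if e' = e then 1 else 0))"
proof (rule proj_unique[OF fin_idx vsp_sub])
  let ?g = "PP v (\<lambda>e'. if e' = e then 1 else 0)"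
  have gin: "?g \<in> Gs v" using proj_in[OF finEv subv[OF assms]] .
  show "emb v ?g \<in> vspace V E d Gs"
    unfolding vspace_def emb_def
  proof (intro CollectI conjI ballI allI impI)
    fix w assume w: "w \<in> V"
    show "(\<lambda>ea. case (w, ea) of (w, e) \<Rightarrow> if w = v then ?g e else 0) \<in> Gs w"
      using gin sub_zero[OF subv[OF w]] by (cases "w = v") auto
  qed (use assms in auto)
  show "\<forall>h\<in>vspace V E d Gs. inner_on (idx V E d) h (\<lambda>x. (if x = (v, e) then 1 else 0) - emb v ?g x) = 0"
  proof
    fix h assume h: "h \<in> vspace V E d Gs"
    have hb: "(\<lambda>e. h (v, e)) \<in> Gs v" using h assms by (simp add: vspace_def)
    have "inner_on (idx V E d) h (\<lambda>x. (if x = (v, e) then 1 else 0) - emb v ?g x)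
       = (\<Sum>w\<in>V. \<Sum>e'\<in>Ev w. cnj (h (w, e')) * ((if (w, e') = (v, e) then 1 else 0) - emb v ?g (w, e')))"
      unfolding inner_on_def idx_Sigma using finV finEv by (simp add: sum.Sigma) (intro sum.cong refl, simp add: case_prod_beta prod_eq_iff)
    also have "\<dots> = (\<Sum>w\<in>V. if w = v then (\<Sum>e'\<in>Ev v. cnj (h (v, e')) * ((if e' = e then 1 else 0) - ?g e')) else 0)"
      by (intro sum.cong refl) (auto simp: emb_def)
    also have "\<dots> = inner_on (Ev v) (\<lambda>e. h (v, e)) (\<lambda>e'. (if e' = e then 1 else 0) - ?g e')"
      using assms finV by (simp add: inner_on_def)
    also have "\<dots> = 0" using proj_orth[OF finEv subv[OF assms] hb] .
    finally show "inner_on (idx V E d) h (\<lambda>x. (if x = (v, e) then 1 else 0) - emb v ?g x) = 0" .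
  qed
qed

definition CW :: "nat \<Rightarrow> 'v \<Rightarrow> 'v list set" where
  "CW j v = {us \<in> walks j v. last (v # us) = v}"

lemma walks_V: "us \<in> walks j w \<Longrightarrow> set us \<subseteq> V" by (simp add: walks_def)

lemma AApow_emb: assumes v: "v \<in> V"
  shows "(AA^^j) (emb v g) (v, e) = (\<Sum>us\<in>CW j v. prodw v us g e)"
proof -
  have "(AA^^j) (emb v g) (v, e) = (\<Sum>us\<in>walks j v. prodw v us (\<lambda>e. emb v g (last (v#us), e)) e)"
    using fun_cong[OF walk_exp[OF v, of j "emb v g"], of e] by simp
  also have "\<dots> = (\<Sum>us\<in>walks j v. if last (v # us) = v then prodw v us g e else 0)"
  proof (intro sum.cong refl)
    fix us assume us: "us \<in> walks j v"
    show "prodw v us (\<lambda>e. emb v g (last (v#us), e)) e = (if last (v # us) = v then prodw v us g e else 0)"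
    proof (cases "last (v # us) = v")
      case True then show ?thesis by (simp add: emb_def)
    next
      case False
      then have "(\<lambda>e. emb v g (last (v#us), e)) = (\<lambda>_. 0)" by (simp add: emb_def)
      then show ?thesis using False prodw_zero[OF v walks_V[OF us]] by simp
    qed
  qed
  also have "\<dots> = (\<Sum>us\<in>CW j v. prodw v us g e)"
    unfolding CW_def by (rule sum.inter_filter[OF fin_walks, symmetric])
  finally show ?thesis .
qed

lemma tau_CW: "tau j = (\<Sum>v\<in>V. \<Sum>us\<in>CW j v. trace_on (Ev v) (Gs v) (prodw v us))"
proof -
  let ?dl = "\<lambda>e. (\<lambda>e'. if e' = e then 1 else (0::complex))"
  have "tau j = (\<Sum>v\<in>V. \<Sum>e\<in>Ev v. (AA^^j) (proj_on (idx V E d) (vspace V E d Gs) (\<lambda>y. if y = (v, e) then 1 else 0)) (v, e))"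
    unfolding tau_def idx_Sigma using finV finEv by (simp add: sum.Sigma)
  also have "\<dots> = (\<Sum>v\<in>V. \<Sum>e\<in>Ev v. \<Sum>us\<in>CW j v. prodw v us (PP v (?dl e)) e)"
    by (intro sum.cong refl) (simp add: proj_delta AApow_emb)
  also have "\<dots> = (\<Sum>v\<in>V. \<Sum>us\<in>CW j v. \<Sum>e\<in>Ev v. prodw v us (PP v (?dl e)) e)"
    by (intro sum.cong refl sum.swap)
  also have "\<dots> = (\<Sum>v\<in>V. \<Sum>us\<in>CW j v. trace_on (Ev v) (Gs v) (prodw v us))"
  proof (intro sum.cong refl)
    fix v us assume v: "v \<in> V" and us: "us \<in> CW j v"
    have "set us \<subseteq> V" using us walks_V unfolding CW_def by auto
    then show "(\<Sum>e\<in>Ev v. prodw v us (PP v (?dl e)) e) = trace_on (Ev v) (Gs v) (prodw v us)"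
      using trace_formula[OF finEv subv[OF v] prodw_lin[OF v]] by simp
  qed
  finally show ?thesis .
qed

end

context gr begin

lemma foldr_prodw: assumes "length c = n"
  shows "i < n \<Longrightarrow> foldr (\<lambda>i acc. A_G E d Gs (c ! i) (c ! ((i + 1) mod n)) \<circ> acc) [i..<n] id
     = prodw (c ! i) (drop (Suc i) c @ [c ! 0])"
proof (induction "n - i" arbitrary: i)
  case 0 then show ?case by simp
next
  case (Suc k)
  show ?case
  proof (cases "Suc i = n")
    case True
    then have u: "[i..<n] = [i]" by (simp add: upt_rec)
    have dr: "drop (Suc i) c = []" using True assms by simp
    show ?thesis unfolding u dr using True by simp
  next
    case False
    then have lt: "Suc i < n" using Suc.prems by simp
    have IH: "foldr (\<lambda>i acc. A_G E d Gs (c ! i) (c ! ((i + 1) mod n)) \<circ> acc) [Suc i..<n] id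
       = prodw (c ! Suc i) (drop (Suc (Suc i)) c @ [c ! 0])"
      using Suc.hyps(1)[of "Suc i"] Suc.hyps(2) lt by simp
    have u: "[i..<n] = i # [Suc i..<n]" using Suc.prems by (simp add: upt_conv_Cons)
    have dr: "drop (Suc i) c = c ! Suc i # drop (Suc (Suc i)) c"
      using lt assms by (simp add: Cons_nth_drop_Suc)
    show ?thesis unfolding u dr using IH lt by simp
  qed
qed

lemma cp_facts: assumes "c \<in> closed_paths V E d j" "2 \<le> j"
  shows "length c = j" "set c \<subseteq> V" "\<And>i. Suc i < j \<Longrightarrow> adj E d (c ! i) (c ! Suc i)"
    "adj E d (c ! (j - 1)) (c ! 0)"
  using assms unfolding closed_paths_def by auto

lemma weight_cp: assumes "c \<in> closed_paths V E d j" "2 \<le> j"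
  shows "weight E d Gs c = trace_on (Ev (hd c)) (Gs (hd c)) (prodw (hd c) (tl c @ [hd c]))"
proof -
  have L: "length c = j" using cp_facts[OF assms] by simp
  have pl: "path_len c = j" using L assms(2) unfolding path_len_def by simp
  have ne: "c \<noteq> []" using L assms(2) by auto
  have hd: "hd c = c ! 0" using ne by (simp add: hd_conv_nth)
  have "foldr (\<lambda>i acc. A_G E d Gs (c ! i) (c ! ((i + 1) mod j)) \<circ> acc) [0..<j] id
     = prodw (c ! 0) (drop (Suc 0) c @ [c ! 0])"
    using foldr_prodw[OF L, of 0] assms(2) by simp
  then show ?thesis unfolding weight_def Let_def pl hd by (simp add: drop_Suc)
qed

lemma cp_to: assumes c: "c \<in> closed_paths V E d j" and j: "2 \<le> j"
  shows "(hd c, tl c @ [hd c]) \<in> Sigma V (CW j)"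
proof -
  note F = cp_facts[OF c j]
  have ne: "c \<noteq> []" using F(1) j by auto
  have hd: "hd c = c ! 0" using ne by (simp add: hd_conv_nth)
  have hV: "hd c \<in> V" using F(2) ne hd_in_set by blast
  have eq: "hd c # tl c @ [hd c] = c @ [hd c]" using ne by simp
  have W: "\<forall>i<j. adj E d ((hd c # tl c @ [hd c]) ! i) ((hd c # tl c @ [hd c]) ! Suc i)"
  proof (intro allI impI)
    fix i assume i: "i < j"
    have a: "(c @ [hd c]) ! i = c ! i" using i F(1) by (simp add: nth_append)
    show "adj E d ((hd c # tl c @ [hd c]) ! i) ((hd c # tl c @ [hd c]) ! Suc i)"
    proof (cases "Suc i < j")
      case True
      have b: "(c @ [hd c]) ! Suc i = c ! Suc i" using True F(1) by (simp add: nth_append)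
      show ?thesis unfolding eq a b using F(3)[OF True] .
    next
      case False
      then have si: "Suc i = j" using i by simp
      have b: "(c @ [hd c]) ! Suc i = c ! 0" using si F(1) hd by (simp add: nth_append)
      have "i = j - 1" using si by simp
      then show ?thesis unfolding eq a b using F(4) by simp
    qed
  qed
  have "tl c @ [hd c] \<in> walks j (hd c)"
    unfolding walks_def using W F(1,2) hV ne by (auto dest: list.set_sel(2))
  then have "tl c @ [hd c] \<in> CW j (hd c)" unfolding CW_def by simp
  then show ?thesis using hV by simp
qed

lemma cp_from: assumes v: "v \<in> V" and us: "us \<in> CW j v" and j: "2 \<le> j"
  shows "v # butlast us \<in> closed_paths V E d j"
proof -
  have L: "length us = j" and S: "set us \<subseteq> V"
    and W: "\<forall>i<j. adj E d ((v#us)!i) ((v#us)!Suc i)" and la: "last (v # us) = v"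
    using us unfolding CW_def walks_def by auto
  have ne: "us \<noteq> []" using L j by auto
  have ct: "v # butlast us = take j (v # us)"
    using L j by (cases j) (simp_all add: butlast_conv_take)
  have nth: "(v # butlast us) ! i = (v # us) ! i" if "i < j" for i
    unfolding ct using that by simp
  have Lc: "length (v # butlast us) = j" using L j by simp
  have Sc: "set (v # butlast us) \<subseteq> V" using v S by (auto dest: in_set_butlastD)
  have ch: "adj E d ((v # butlast us) ! i) ((v # butlast us) ! Suc i)" if "Suc i < j" for i
    using W that nth[of i] nth[of "Suc i"] by simp
  have lastj: "(v # us) ! j = v" using la L ne j by (cases j) (auto simp: last_conv_nth)
  have cl: "adj E d ((v # butlast us) ! (j - 1)) ((v # butlast us) ! 0)"
  proof -
    have "adj E d ((v#us)!(j-1)) ((v#us)!Suc (j-1))" using W[rule_format, of "j - 1"] j by simp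
    then show ?thesis using nth[of "j - 1"] j lastj by simp
  qed
  show ?thesis unfolding closed_paths_def using j Lc Sc ch cl by auto
qed

lemma paths_sum_ge2: assumes j: "2 \<le> j"
  shows "(\<Sum>c\<in>closed_paths V E d j. weight E d Gs c) = (\<Sum>v\<in>V. \<Sum>us\<in>CW j v. trace_on (Ev v) (Gs v) (prodw v us))"
proof -
  have "(\<Sum>c\<in>closed_paths V E d j. weight E d Gs c)
      = (\<Sum>p\<in>Sigma V (CW j). trace_on (Ev (fst p)) (Gs (fst p)) (prodw (fst p) (snd p)))"
  proof (rule sum.reindex_bij_witness[where j="\<lambda>c. (hd c, tl c @ [hd c])" and i="\<lambda>p. fst p # butlast (snd p)"])
    fix c assume c: "c \<in> closed_paths V E d j"
    have ne: "c \<noteq> []" using cp_facts(1)[OF c j] j by auto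
    show "fst (hd c, tl c @ [hd c]) # butlast (snd (hd c, tl c @ [hd c])) = c" using ne by simp
    show "(hd c, tl c @ [hd c]) \<in> Sigma V (CW j)" using cp_to[OF c j] .
    show "trace_on (Ev (fst (hd c, tl c @ [hd c]))) (Gs (fst (hd c, tl c @ [hd c])))
        (prodw (fst (hd c, tl c @ [hd c])) (snd (hd c, tl c @ [hd c]))) = weight E d Gs c"
      using weight_cp[OF c j] by simp
  next
    fix p assume p: "p \<in> Sigma V (CW j)"
    obtain v us where pe: "p = (v, us)" by force
    have v: "v \<in> V" and us: "us \<in> CW j v" using p pe by auto
    have L: "length us = j" and la: "last (v # us) = v" using us unfolding CW_def walks_def by auto
    have ne: "us \<noteq> []" using L j by auto
    have "tl (v # butlast us) @ [hd (v # butlast us)] = us"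
      using ne la append_butlast_last_id[OF ne] by simp
    then show "(hd (fst p # butlast (snd p)), tl (fst p # butlast (snd p)) @ [hd (fst p # butlast (snd p))]) = p"
      using pe by simp
    show "fst p # butlast (snd p) \<in> closed_paths V E d j" using cp_from[OF v us j] pe by simp
  qed
  also have "\<dots> = (\<Sum>v\<in>V. \<Sum>us\<in>CW j v. trace_on (Ev v) (Gs v) (prodw v us))"
    using finV fin_walks unfolding CW_def by (simp add: sum.Sigma split_def)
  finally show ?thesis .
qed


lemma paths_0: "closed_paths V E d 0 = (\<lambda>v. [v]) ` V"
  unfolding closed_paths_def by auto

lemma paths_1: "closed_paths V E d 1 = {}"
  unfolding closed_paths_def using adj_props(3) by auto

lemma CW_0: "CW 0 v = {[]}" unfolding CW_def walks_0 by simp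

lemma CW_1: "CW 1 v = {}"
proof -
  have False if us: "us \<in> CW 1 v" for us
  proof -
    have L: "length us = 1" and W: "\<forall>i<1. adj E d ((v#us)!i) ((v#us)!Suc i)" and la: "last (v # us) = v"
      using us unfolding CW_def walks_def by auto
    obtain u where ue: "us = [u]" using L by (cases us) auto
    have "adj E d v u" using W ue by simp
    moreover have "u = v" using la ue by simp
    ultimately show False using adj_props(3) by blast
  qed
  then show ?thesis by blast
qed

lemma tau_paths: "tau j = (\<Sum>c\<in>closed_paths V E d j. weight E d Gs c)"
proof -
  consider "j = 0" | "j = 1" | "2 \<le> j" by linarith
  then show ?thesis
  proof cases
    case 1
    have "(\<Sum>c\<in>closed_paths V E d j. weight E d Gs c) = (\<Sum>v\<in>V. weight E d Gs [v])"
      unfolding 1 paths_0 by (subst sum.reindex) (auto simp: inj_on_def)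
    also have "\<dots> = (\<Sum>v\<in>V. \<Sum>us\<in>CW j v. trace_on (Ev v) (Gs v) (prodw v us))"
      unfolding 1 CW_0 by (simp add: weight_def path_len_def)
    finally show ?thesis using tau_CW by simp
  next
    case 2
    then show ?thesis using tau_CW[of 1] paths_1 CW_1 by simp
  next
    case 3
    then show ?thesis using tau_CW paths_sum_ge2 by simp
  qed
qed

lemma A_G_nrm: assumes a: "adj E d w u"
  shows "nrm (Ev w) (A_G E d Gs w u g) \<le> nrm (Ev u) g"
proof -
  let ?eb = "edge_betw E d w u"
  have wV: "w \<in> V" using adj_props(4)[OF a] .
  have "nrm (Ev w) (A_G E d Gs w u g) \<le> nrm (Ev w) (A_max E d w u g)"
    unfolding A_G_def by (rule proj_nrm[OF finEv subv[OF wV]])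
  also have "nrm (Ev w) (A_max E d w u g) = (cmod (g ?eb))^2"
  proof -
    have "nrm (Ev w) (A_max E d w u g) = (\<Sum>e\<in>Ev w. if e = ?eb then (cmod (g ?eb))^2 else 0)"
      unfolding nrm_def A_max_def by (intro sum.cong refl) auto
    also have "\<dots> = (cmod (g ?eb))^2" using eb_in(1)[OF a] finEv by simp
    finally show ?thesis .
  qed
  also have "\<dots> \<le> nrm (Ev u) g" using nrm_pt[OF finEv eb_in(2)[OF a]] .
  finally show ?thesis .
qed

lemma prodw_nrm: "us \<in> walks j w \<Longrightarrow> nrm (Ev w) (prodw w us b) \<le> nrm (Ev (last (w # us))) b"
proof (induction j arbitrary: w us)
  case 0 then show ?case by (simp add: walks_0)
next
  case (Suc j)
  obtain u us' where ue: "us = u # us'" and uN: "u \<in> N w" and us': "us' \<in> walks j u"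
    using Suc.prems unfolding walks_Suc by auto
  have a: "adj E d w u" using uN unfolding N_def by auto
  have "nrm (Ev w) (prodw w us b) = nrm (Ev w) (A_G E d Gs w u (prodw u us' b))" using ue by simp
  also have "\<dots> \<le> nrm (Ev u) (prodw u us' b)" by (rule A_G_nrm[OF a])
  also have "\<dots> \<le> nrm (Ev (last (u # us'))) b" by (rule Suc.IH[OF us'])
  finally show ?case using ue by simp
qed

definition KK :: real where
  "KK = (\<Sum>v\<in>V. real (card (SOME B. onb_on (Ev v) (Gs v) B) * card (Ev v)))"

lemma KK_ge: "v \<in> V \<Longrightarrow> real (card (SOME B. onb_on (Ev v) (Gs v) B) * card (Ev v)) \<le> KK"
  unfolding KK_def by (rule member_le_sum) (auto simp: finV)

lemma weight_bound: assumes c: "c \<in> closed_paths V E d j" shows "cmod (weight E d Gs c) \<le> KK"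
proof -
  consider "j = 0" | "j = 1" | "2 \<le> j" by linarith
  then show ?thesis
  proof cases
    case 1
    then obtain v where v: "v \<in> V" and ce: "c = [v]" using c paths_0 by auto
    have "weight E d Gs c = trace_on (Ev v) (Gs v) id" unfolding ce by (simp add: weight_def path_len_def)
    also have "cmod \<dots> \<le> real (card (SOME B. onb_on (Ev v) (Gs v) B) * card (Ev v))"
      by (rule trace_bound[OF finEv subv[OF v]]) simp
    finally show ?thesis using KK_ge[OF v] by linarith
  next
    case 2 then show ?thesis using c paths_1 by simp
  next
    case 3
    have p: "(hd c, tl c @ [hd c]) \<in> Sigma V (CW j)" using cp_to[OF c 3] .
    then have v: "hd c \<in> V" and us: "tl c @ [hd c] \<in> CW j (hd c)" by auto
    have la: "last (hd c # tl c @ [hd c]) = hd c" by simp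
    have wk: "tl c @ [hd c] \<in> walks j (hd c)" using us unfolding CW_def by simp
    have "cmod (weight E d Gs c) \<le> real (card (SOME B. onb_on (Ev (hd c)) (Gs (hd c)) B) * card (Ev (hd c)))"
      unfolding weight_cp[OF c 3]
      by (rule trace_bound[OF finEv subv[OF v]]) (use prodw_nrm[OF wk] in simp)
    then show ?thesis using KK_ge[OF v] by linarith
  qed
qed

end

context gr begin

lemma pl_paths: "c \<in> closed_paths V E d n \<Longrightarrow> path_len c = n"
  unfolding closed_paths_def path_len_def by (auto split: if_splits dest: adj_props(3))

lemma paths_sub: "n \<noteq> 0 \<Longrightarrow> closed_paths V E d n \<subseteq> {xs. set xs \<subseteq> V \<and> length xs = n}"
  unfolding closed_paths_def by auto

lemma fin_paths: "finite (closed_paths V E d n)"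
proof (cases "n = 0")
  case True then show ?thesis using finV by (simp add: paths_0)
next
  case False then show ?thesis using finite_subset[OF paths_sub finite_lists_length_eq[OF finV]] by blast
qed

lemma card_paths: "real (card (closed_paths V E d n)) \<le> real (card V) ^ n + real (card V)"
proof (cases "n = 0")
  case True
  have "card (closed_paths V E d n) \<le> card V" unfolding True paths_0 by (rule card_image_le[OF finV])
  then show ?thesis using True by simp
next
  case False
  have "card (closed_paths V E d n) \<le> card {xs. set xs \<subseteq> V \<and> length xs = n}"
    by (rule card_mono[OF finite_lists_length_eq[OF finV] paths_sub[OF False]])
  then have "card (closed_paths V E d n) \<le> card V ^ n" using card_lists_length_eq[OF finV] by simp
  then have "real (card (closed_paths V E d n)) \<le> real (card V) ^ n" by (metis of_nat_le_iff of_nat_power)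
  then show ?thesis using of_nat_0_le_iff[of "card V"] by linarith
qed

lemma KK_nonneg: "0 \<le> KK" unfolding KK_def by (simp add: sum_nonneg)

theorem main:
  shows "summable (\<lambda>n. \<Sum>c\<in>closed_paths V E d n. complex_of_real (t ^ n / fact n) * weight E d Gs c)
    \<and> heat_trace V E d Gs t = complex_of_real (exp (- t)) *
        (\<Sum>n. \<Sum>c\<in>closed_paths V E d n. complex_of_real (t ^ n / fact n) * weight E d Gs c)
    \<and> (\<lambda>c. complex_of_real (t ^ path_len c / fact (path_len c)) * weight E d Gs c)
        summable_on all_closed_paths V E d
    \<and> heat_trace V E d Gs t = complex_of_real (exp (- t)) *
        (\<Sum>\<^sub>\<infinity>c\<in>all_closed_paths V E d. complex_of_real (t ^ path_len c / fact (path_len c)) * weight E d Gs c)"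
proof -
  let ?C = "closed_paths V E d"
  let ?f = "\<lambda>c. complex_of_real (t ^ path_len c / fact (path_len c)) * weight E d Gs c"
  let ?g = "\<lambda>n. \<Sum>c\<in>?C n. complex_of_real (t ^ n / fact n) * weight E d Gs c"
  let ?h = "\<lambda>n. \<Sum>c\<in>?C n. norm (?f c)"
  have geq: "?g = (\<lambda>n. complex_of_real (t ^ n / fact n) * tau n)"
    by (intro ext) (simp add: tau_paths sum_distrib_left)
  have gf: "?g n = (\<Sum>c\<in>?C n. ?f c)" for n by (intro sum.cong refl) (simp add: pl_paths)
  have P1: "summable ?g" unfolding geq by (rule heat_formula(1))
  have P2: "heat_trace V E d Gs t = complex_of_real (exp (- t)) * (\<Sum>n. ?g n)"
    unfolding geq by (rule heat_formula(2))
  let ?B = "\<lambda>n. KK * (inverse (fact n) * (real (card V) * \<bar>t\<bar>)^n) + real (card V) * KK * (inverse (fact n) * \<bar>t\<bar>^n)"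
  have hB: "?h n \<le> ?B n" for n
  proof -
    have "?h n \<le> (\<Sum>c\<in>?C n. \<bar>t\<bar>^n / fact n * KK)"
    proof (intro sum_mono)
      fix c assume c: "c \<in> ?C n"
      have "norm (?f c) = \<bar>t\<bar>^n / fact n * cmod (weight E d Gs c)"
        using pl_paths[OF c] by (simp add: norm_mult norm_divide norm_power power_abs)
      also have "\<dots> \<le> \<bar>t\<bar>^n / fact n * KK" by (intro mult_left_mono weight_bound[OF c]) auto
      finally show "norm (?f c) \<le> \<bar>t\<bar>^n / fact n * KK" .
    qed
    also have "\<dots> = real (card (?C n)) * (\<bar>t\<bar>^n / fact n * KK)" by simp
    also have "\<dots> \<le> (real (card V) ^ n + real (card V)) * (\<bar>t\<bar>^n / fact n * KK)"
      by (intro mult_right_mono card_paths) (auto simp: KK_nonneg)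
    also have "\<dots> = ?B n" by (simp add: field_simps power_mult_distrib)
    finally show ?thesis .
  qed
  have sB: "summable ?B" by (intro summable_add summable_mult summable_exp)
  have h_nonneg: "0 \<le> ?h n" for n by (simp add: sum_nonneg)
  have sh: "summable ?h"
    by (rule summable_comparison_test'[OF sB, where N=0]) (use hB h_nonneg in simp)
  have sgn: "summable (\<lambda>n. norm (?g n))"
  proof (rule summable_comparison_test'[OF sh, where N=0])
    fix n :: nat
    have "norm (?g n) \<le> ?h n" unfolding gf by (rule norm_sum)
    then show "norm (norm (?g n)) \<le> ?h n" by (simp only: real_norm_def abs_norm_cancel)
  qed
  have disj: "disjoint_family_on ?C UNIV"
    unfolding disjoint_family_on_def using pl_paths by blast
  have acp: "all_closed_paths V E d = (\<Union>n\<in>UNIV. ?C n)" unfolding all_closed_paths_def by simp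
  have hsum: "(\<lambda>c. norm (?f c)) summable_on all_closed_paths V E d"
    unfolding acp
  proof (rule summable_on_UnionI[where g="?h"])
    show "\<And>n. n \<in> UNIV \<Longrightarrow> ((\<lambda>c. norm (?f c)) has_sum ?h n) (?C n)"
      using fin_paths by simp
    show "?h summable_on UNIV"
      by (rule norm_summable_imp_summable_on) (use sh h_nonneg in simp)
    show "\<And>n c. n \<in> UNIV \<Longrightarrow> c \<in> ?C n \<Longrightarrow> 0 \<le> norm (?f c)" by simp
    show "disjoint_family_on ?C UNIV" by (rule disj)
  qed
  have P3: "?f summable_on all_closed_paths V E d" by (rule abs_summable_summable[OF hsum])
  have inj: "inj_on snd (Sigma UNIV ?C)"
    unfolding inj_on_def using pl_paths by auto
  have im: "snd ` (Sigma UNIV ?C) = all_closed_paths V E d" unfolding acp by force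
  have sS: "(?f \<circ> snd) summable_on Sigma UNIV ?C"
    using P3 summable_on_reindex[OF inj, of ?f] im by simp
  have gS: "(?g has_sum (\<Sum>n. ?g n)) UNIV"
    by (rule norm_summable_imp_has_sum[OF sgn summable_sums[OF P1]])
  have "((?f \<circ> snd) has_sum (\<Sum>n. ?g n)) (Sigma UNIV ?C)"
  proof (rule has_sum_SigmaI[OF _ gS sS])
    fix n :: nat assume "n \<in> UNIV"
    show "((\<lambda>y. (?f \<circ> snd) (n, y)) has_sum ?g n) (?C n)"
      unfolding gf using fin_paths by simp
  qed
  then have "(?f has_sum (\<Sum>n. ?g n)) (all_closed_paths V E d)"
    using has_sum_reindex[OF inj, of ?f] im by simp
  then have P4: "infsum ?f (all_closed_paths V E d) = (\<Sum>n. ?g n)" by (rule infsumI)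
  show ?thesis using P1 P2 P3 P4 by simp
qed

end

theorem theorem7p7:
  fixes V :: "'v set" and E :: "'e set" and d :: "'e \<Rightarrow> 'v \<times> 'v"
    and Gs :: "'v \<Rightarrow> ('e \<Rightarrow> complex) set" and t :: real
  assumes "finite_simple_graph V E d"
    and "\<forall>v\<in>V. edges_at E d v \<noteq> {}"
    and "vertex_space V E d Gs"
  shows "summable (\<lambda>n. \<Sum>c\<in>closed_paths V E d n. complex_of_real (t ^ n / fact n) * weight E d Gs c)
    \<and> heat_trace V E d Gs t = complex_of_real (exp (- t)) *
        (\<Sum>n. \<Sum>c\<in>closed_paths V E d n. complex_of_real (t ^ n / fact n) * weight E d Gs c)
    \<and> (\<lambda>c. complex_of_real (t ^ path_len c / fact (path_len c)) * weight E d Gs c)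
        summable_on all_closed_paths V E d
    \<and> heat_trace V E d Gs t = complex_of_real (exp (- t)) *
        (\<Sum>\<^sub>\<infinity>c\<in>all_closed_paths V E d. complex_of_real (t ^ path_len c / fact (path_len c)) * weight E d Gs c)"
proof -
  interpret gr V E d Gs using assms(1,3) by unfold_locales
  show ?thesis by (rule main)
qed

end
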